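(* Let $\mathbf{\Sigma}$ be a cluster pattern of rank $2$ with coefficients in a semifield $\mathbb{P}$ whose initial seed $\Sigma_{t_0}$ is not coprime. Then $\mathcal{L}_{t_0}=\mathcal{A}=\overline{\mathcal{A}}\subsetneq\mathcal{U}_{t_0}$.
   Context: A semifield is a multiplicative abelian group with a commutative, associative addition $\oplus$ satisfying $(a\oplus b)c=ac\oplus bc$; $\mathbb{Z}\mathbb{P}$ is its group ring and $\mathbb{Q}\mathbb{P}$ the fraction field. A seed with coefficients in $\mathbb{P}$ is $(\mathbf{x},\mathbf{y},B)$ with $\mathbf{x}$ a generating transcendence basis of an ambient field $\mathcal{F}\cong\mathbb{Q}\mathbb{P}(u_1,\dots,u_n)$ over $\mathbb{Q}\mathbb{P}$, $\mathbf{y}\in\mathbb{P}^n$, $B$ an $n\times n$ skew-symmetrizable integer matrix. With $[a]_+=\max(a,0)$ and $\hat y_i=y_i\prod_jx_j^{b_{ji}}$, the mutation $\mu_k$ is: $x'_k=x_k^{-1}\big(\prod_{j}x_j^{[-b_{jk}]_+}\big)\frac{1+\hat y_k}{1\oplus y_k}$, $x'_i=x_i$ ($i\ne k$); $y'_k=y_k^{-1}$, $y'_i=y_iy_k^{[b_{ki}]_+}(1\oplus y_k)^{-b_{ki}}$ ($i\neq k$); $b'_{ij}=-b_{ij}$ if $i=k$ or $j=k$, and $b'_{ij}=b_{ij}+b_{ik}[b_{kj}]_++[-b_{ik}]_+b_{kj}$ otherwise. $\mathbb{T}_n$ is the $n$-regular tree with edges labeled $1,\dots,n$, distinct at each vertex.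 A cluster pattern is $\{\Sigma_t=(\mathbf{x}_t,\mathbf{y}_t,B_t)\}_{t\in\mathbb{T}_n}$ with $\Sigma_{t'}=\mu_k(\Sigma_t)$ whenever $t,t'$ are joined by an edge labeled $k$. The cluster algebra $\mathcal{A}$ is the $\mathbb{Z}\mathbb{P}$-subalgebra of $\mathcal{F}$ generated by all cluster variables $x_{i;t}$; the upper cluster algebra is $\overline{\mathcal{A}}=\bigcap_{t\in\mathbb{T}_n}\mathbb{Z}\mathbb{P}[\mathbf{x}_t^{\pm1}]$. For $t\in\mathbb{T}_n$ let $t_i$ be the vertex $i$-adjacent to $t$; the upper bound is $\mathcal{U}_t=\mathbb{Z}\mathbb{P}[\mathbf{x}_t^{\pm1}]\cap\bigcap_{i=1}^n\mathbb{Z}\mathbb{P}[\mathbf{x}_{t_i}^{\pm1}]$ and the lower bound is $\mathcal{L}_t=\mathbb{Z}\mathbb{P}[\mathbf{x}_t,\mathbf{x}_{t_1},\dots,\mathbf{x}_{t_n}]$. For $k=1,\dots,n$ let $P_{k;t}=\frac{1}{1\oplus y_{k;t}}\big(y_{k;t}\prod_jx_{j;t}^{[b_{jk;t}]_+}+\prod_jx_{j;t}^{[-b_{jk;t}]_+}\big)$; the seed $\Sigma_t$ is coprime if $P_{1;t},\dots,P_{n;t}$ are pairwise coprime in $\mathbb{Z}\mathbb{P}[\mathbf{x}_t]$, i.e. every common factor of two of them lies in $\mathbb{Z}\mathbb{P}^{\times}=\{\pm1\}\mathbb{P}$. *)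

theory Defs
  imports Main
begin

(* The semifield P is modelled as a subset of the ambient field 'f (P \<subseteq> ZP \<subseteq> F),
   with its own addition splus (the semifield addition \<oplus>, NOT the field addition). *)

definition pos :: "int \<Rightarrow> int" where
  "pos a = max a 0"

definition semifield_in :: "'f::field set \<Rightarrow> ('f \<Rightarrow> 'f \<Rightarrow> 'f) \<Rightarrow> bool" where
  "semifield_in P splus \<longleftrightarrow>
     1 \<in> P \<and> 0 \<notin> P \<and>
     (\<forall>a\<in>P. \<forall>b\<in>P. a * b \<in> P) \<and> (\<forall>a\<in>P. inverse a \<in> P) \<and>
     (\<forall>a\<in>P. \<forall>b\<in>P. splus a b \<in> P) \<and>
     (\<forall>a\<in>P. \<forall>b\<in>P. splus a b = splus b a) \<and>
     (\<forall>a\<in>P. \<forall>b\<in>P. \<forall>c\<in>P. splus (splus a b) c = splus a (splus b c)) \<and>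
     (\<forall>a\<in>P. \<forall>b\<in>P. \<forall>c\<in>P. splus a b * c = splus (a * c) (b * c))"

text \<open>The elements of P are linearly independent over the integers, so that the
  subring of 'f generated by P is (isomorphic to) the group ring ZP.\<close>
definition group_ring_embedded :: "'f::field set \<Rightarrow> bool" where
  "group_ring_embedded P \<longleftrightarrow>
     (\<forall>S m. finite S \<longrightarrow> S \<subseteq> P \<longrightarrow> (\<Sum>p\<in>S. of_int (m p) * p) = 0 \<longrightarrow> (\<forall>p\<in>S. m p = 0))"

definition is_subring :: "'f::field set \<Rightarrow> bool" where
  "is_subring R \<longleftrightarrow> 0 \<in> R \<and> 1 \<in> R \<and> (\<forall>a\<in>R. \<forall>b\<in>R. a + b \<in> R \<and> a * b \<in> R) \<and> (\<forall>a\<in>R. - a \<in> R)"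

definition ring_gen :: "'f::field set \<Rightarrow> 'f set" where
  "ring_gen G = \<Inter> {R. is_subring R \<and> G \<subseteq> R}"

definition ZP :: "'f::field set \<Rightarrow> 'f set" where
  "ZP P = ring_gen P"

definition poly_ring :: "'f::field set \<Rightarrow> nat \<Rightarrow> (nat \<Rightarrow> 'f) \<Rightarrow> 'f set" where
  "poly_ring P n x = ring_gen (P \<union> x ` {1..n})"

definition laurent_ring :: "'f::field set \<Rightarrow> nat \<Rightarrow> (nat \<Rightarrow> 'f) \<Rightarrow> 'f set" where
  "laurent_ring P n x = ring_gen (P \<union> x ` {1..n} \<union> (\<lambda>i. inverse (x i)) ` {1..n})"

text \<open>x_1,...,x_n algebraically independent over QP (equivalently: no nonzero polynomial
  with coefficients in ZP vanishes at x).\<close>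
definition alg_indep :: "'f::field set \<Rightarrow> nat \<Rightarrow> (nat \<Rightarrow> 'f) \<Rightarrow> bool" where
  "alg_indep P n x \<longleftrightarrow>
     (\<forall>S c. finite S \<longrightarrow> S \<subseteq> {a :: nat \<Rightarrow> nat. \<forall>i. i \<notin> {1..n} \<longrightarrow> a i = 0} \<longrightarrow>
        (\<forall>a\<in>S. c a \<in> ZP P) \<longrightarrow>
        (\<Sum>a\<in>S. c a * (\<Prod>i\<in>{1..n}. x i ^ a i)) = 0 \<longrightarrow> (\<forall>a\<in>S. c a = 0))"

definition skew_symmetrizable :: "nat \<Rightarrow> (nat \<Rightarrow> nat \<Rightarrow> int) \<Rightarrow> bool" where
  "skew_symmetrizable n B \<longleftrightarrow>
     (\<exists>d :: nat \<Rightarrow> int. (\<forall>i\<in>{1..n}. d i > 0) \<and>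
        (\<forall>i\<in>{1..n}. \<forall>j\<in>{1..n}. d i * B i j = - (d j * B j i)))"

definition is_seed :: "'f::field set \<Rightarrow> nat \<Rightarrow> (nat \<Rightarrow> 'f) \<Rightarrow> (nat \<Rightarrow> 'f) \<Rightarrow> (nat \<Rightarrow> nat \<Rightarrow> int) \<Rightarrow> bool" where
  "is_seed P n x y B \<longleftrightarrow> alg_indep P n x \<and> (\<forall>i\<in>{1..n}. y i \<in> P) \<and> skew_symmetrizable n B"

definition is_mutation ::
  "'f::field set \<Rightarrow> ('f \<Rightarrow> 'f \<Rightarrow> 'f) \<Rightarrow> nat \<Rightarrow> nat \<Rightarrow>
   (nat \<Rightarrow> 'f) \<Rightarrow> (nat \<Rightarrow> 'f) \<Rightarrow> (nat \<Rightarrow> nat \<Rightarrow> int) \<Rightarrow>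
   (nat \<Rightarrow> 'f) \<Rightarrow> (nat \<Rightarrow> 'f) \<Rightarrow> (nat \<Rightarrow> nat \<Rightarrow> int) \<Rightarrow> bool" where
  "is_mutation P splus n k x y B x' y' B' \<longleftrightarrow>
     x' k = inverse (x k) * (\<Prod>j\<in>{1..n}. x j powi pos (- B j k))
              * (1 + y k * (\<Prod>j\<in>{1..n}. x j powi B j k)) / splus 1 (y k) \<and>
     (\<forall>i\<in>{1..n}. i \<noteq> k \<longrightarrow> x' i = x i) \<and>
     y' k = inverse (y k) \<and>
     (\<forall>i\<in>{1..n}. i \<noteq> k \<longrightarrow>
        y' i = y i * y k powi pos (B k i) * splus 1 (y k) powi (- B k i)) \<and>
     (\<forall>i\<in>{1..n}. \<forall>j\<in>{1..n}.
        B' i j = (if i = k \<or> j = k then - B i j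
                  else B i j + B i k * pos (B k j) + pos (- B i k) * B k j))"

text \<open>The 2-regular tree T_2 is the path on the integers: the edge between m and m+1
  carries label 1 if m is even and 2 if m is odd.\<close>
definition lab2 :: "int \<Rightarrow> nat" where
  "lab2 m = (if even m then 1 else 2)"

definition cluster_pattern2 ::
  "'f::field set \<Rightarrow> ('f \<Rightarrow> 'f \<Rightarrow> 'f) \<Rightarrow>
   (int \<Rightarrow> nat \<Rightarrow> 'f) \<Rightarrow> (int \<Rightarrow> nat \<Rightarrow> 'f) \<Rightarrow> (int \<Rightarrow> nat \<Rightarrow> nat \<Rightarrow> int) \<Rightarrow> bool" where
  "cluster_pattern2 P splus X Y B \<longleftrightarrow>
     (\<forall>t. is_seed P 2 (X t) (Y t) (B t)) \<and>
     (\<forall>m. is_mutation P splus 2 (lab2 m) (X m) (Y m) (B m) (X (m+1)) (Y (m+1)) (B (m+1)) \<and>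
          is_mutation P splus 2 (lab2 m) (X (m+1)) (Y (m+1)) (B (m+1)) (X m) (Y m) (B m))"

definition exch_poly :: "('f::field \<Rightarrow> 'f \<Rightarrow> 'f) \<Rightarrow> nat \<Rightarrow> nat \<Rightarrow>
   (nat \<Rightarrow> 'f) \<Rightarrow> (nat \<Rightarrow> 'f) \<Rightarrow> (nat \<Rightarrow> nat \<Rightarrow> int) \<Rightarrow> 'f" where
  "exch_poly splus n k x y B =
     (1 / splus 1 (y k)) * (y k * (\<Prod>j\<in>{1..n}. x j ^ nat (pos (B j k)))
                             + (\<Prod>j\<in>{1..n}. x j ^ nat (pos (- B j k))))"

text \<open>Coprime seed: P_1,...,P_n pairwise coprime in ZP[x], i.e. every common divisor
  (in ZP[x]) of two of them lies in ZP^units = {\<pm>1} P.\<close>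
definition coprime_seed :: "'f::field set \<Rightarrow> ('f \<Rightarrow> 'f \<Rightarrow> 'f) \<Rightarrow> nat \<Rightarrow>
   (nat \<Rightarrow> 'f) \<Rightarrow> (nat \<Rightarrow> 'f) \<Rightarrow> (nat \<Rightarrow> nat \<Rightarrow> int) \<Rightarrow> bool" where
  "coprime_seed P splus n x y B \<longleftrightarrow>
     (\<forall>k\<in>{1..n}. \<forall>l\<in>{1..n}. k \<noteq> l \<longrightarrow>
       (\<forall>d\<in>poly_ring P n x.
          (\<exists>q\<in>poly_ring P n x. exch_poly splus n k x y B = d * q) \<longrightarrow>
          (\<exists>q\<in>poly_ring P n x. exch_poly splus n l x y B = d * q) \<longrightarrow>
          d \<in> P \<union> uminus ` P))"

text \<open>Cluster algebra, upper cluster algebra, upper and lower bounds (rank 2).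
  The neighbours t_1, t_2 of t in T_2 are t - 1 and t + 1.\<close>
definition cluster_alg2 :: "'f::field set \<Rightarrow> (int \<Rightarrow> nat \<Rightarrow> 'f) \<Rightarrow> 'f set" where
  "cluster_alg2 P X = ring_gen (P \<union> {X t i | t i. i \<in> {1..2}})"

definition upper_cluster_alg2 :: "'f::field set \<Rightarrow> (int \<Rightarrow> nat \<Rightarrow> 'f) \<Rightarrow> 'f set" where
  "upper_cluster_alg2 P X = (\<Inter>t. laurent_ring P 2 (X t))"

definition upper_bound2 :: "'f::field set \<Rightarrow> (int \<Rightarrow> nat \<Rightarrow> 'f) \<Rightarrow> int \<Rightarrow> 'f set" where
  "upper_bound2 P X t = laurent_ring P 2 (X t) \<inter> laurent_ring P 2 (X (t - 1)) \<inter> laurent_ring P 2 (X (t + 1))"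

definition lower_bound2 :: "'f::field set \<Rightarrow> (int \<Rightarrow> nat \<Rightarrow> 'f) \<Rightarrow> int \<Rightarrow> 'f set" where
  "lower_bound2 P X t = ring_gen (P \<union> X t ` {1..2} \<union> X (t - 1) ` {1..2} \<union> X (t + 1) ` {1..2})"

end

theory Submission
  imports Defs "HOL-Computational_Algebra.Polynomial"
begin

lemma subring_UNIV: "is_subring (UNIV::'f::field set)"
  by (simp add: is_subring_def)

lemma ring_gen_subring: "is_subring (ring_gen G)"
  unfolding ring_gen_def is_subring_def by auto

lemma ring_gen_incl: "G \<subseteq> ring_gen G"
  unfolding ring_gen_def by auto

lemma ring_gen_min: "is_subring R \<Longrightarrow> G \<subseteq> R \<Longrightarrow> ring_gen G \<subseteq> R"
  unfolding ring_gen_def by auto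

lemma ring_gen_mono: "G \<subseteq> H \<Longrightarrow> ring_gen G \<subseteq> ring_gen H"
  by (meson order_trans ring_gen_incl ring_gen_min ring_gen_subring)

lemma sr_0: "is_subring R \<Longrightarrow> 0 \<in> R" by (simp add: is_subring_def)
lemma sr_1: "is_subring R \<Longrightarrow> 1 \<in> R" by (simp add: is_subring_def)
lemma sr_add: "is_subring R \<Longrightarrow> a \<in> R \<Longrightarrow> b \<in> R \<Longrightarrow> a + b \<in> R" by (simp add: is_subring_def)
lemma sr_mult: "is_subring R \<Longrightarrow> a \<in> R \<Longrightarrow> b \<in> R \<Longrightarrow> a * b \<in> R" by (simp add: is_subring_def)
lemma sr_uminus: "is_subring R \<Longrightarrow> a \<in> R \<Longrightarrow> - a \<in> R" by (simp add: is_subring_def)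
lemma sr_diff: "is_subring R \<Longrightarrow> a \<in> R \<Longrightarrow> b \<in> R \<Longrightarrow> a - b \<in> R"
  using sr_add[of R a "-b"] sr_uminus[of R b] by simp
lemma sr_power: "is_subring R \<Longrightarrow> a \<in> R \<Longrightarrow> a ^ n \<in> R"
  by (induction n) (auto intro: sr_1 sr_mult)
lemma sr_sum: "is_subring R \<Longrightarrow> (\<And>i. i \<in> A \<Longrightarrow> f i \<in> R) \<Longrightarrow> sum f A \<in> R"
  by (induction A rule: infinite_finite_induct) (auto intro: sr_0 sr_add)
lemma sr_prod: "is_subring R \<Longrightarrow> (\<And>i. i \<in> A \<Longrightarrow> f i \<in> R) \<Longrightarrow> prod f A \<in> R"
  by (induction A rule: infinite_finite_induct) (auto intro: sr_1 sr_mult)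
lemma sr_of_nat: "is_subring R \<Longrightarrow> of_nat n \<in> R"
  by (induction n) (auto intro: sr_0 sr_add sr_1)
lemma sr_of_int: "is_subring R \<Longrightarrow> of_int k \<in> R"
  by (cases k rule: int_cases) (auto intro: sr_of_nat sr_uminus simp del: of_nat_Suc)

lemmas rg = ring_gen_subring
lemma rg_add: "a \<in> ring_gen G \<Longrightarrow> b \<in> ring_gen G \<Longrightarrow> a + b \<in> ring_gen G" by (rule sr_add[OF rg])
lemma rg_mult: "a \<in> ring_gen G \<Longrightarrow> b \<in> ring_gen G \<Longrightarrow> a * b \<in> ring_gen G" by (rule sr_mult[OF rg])
lemma rg_diff: "a \<in> ring_gen G \<Longrightarrow> b \<in> ring_gen G \<Longrightarrow> a - b \<in> ring_gen G" by (rule sr_diff[OF rg])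
lemma rg_uminus: "a \<in> ring_gen G \<Longrightarrow> - a \<in> ring_gen G" by (rule sr_uminus[OF rg])
lemma rg_power: "a \<in> ring_gen G \<Longrightarrow> a ^ n \<in> ring_gen G" by (rule sr_power[OF rg])
lemma rg_sum: "(\<And>i. i \<in> A \<Longrightarrow> f i \<in> ring_gen G) \<Longrightarrow> sum f A \<in> ring_gen G" by (rule sr_sum[OF rg])
lemma rg_0: "0 \<in> ring_gen G" by (rule sr_0[OF rg])
lemma rg_1: "1 \<in> ring_gen G" by (rule sr_1[OF rg])
lemma rg_gen: "a \<in> G \<Longrightarrow> a \<in> ring_gen G" using ring_gen_incl by blast

definition PV :: "'f::field set \<Rightarrow> 'f \<Rightarrow> 'f set" where
  "PV R v = {poly F v | F. \<forall>i. coeff F i \<in> R}"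

lemma PV_subring:
  assumes R: "is_subring R"
  shows "is_subring (PV R v)"
  unfolding is_subring_def
proof (intro conjI ballI)
  show "0 \<in> PV R v" unfolding PV_def using sr_0[OF R] by (auto intro!: exI[of _ 0])
  show "1 \<in> PV R v" unfolding PV_def using sr_0[OF R] sr_1[OF R]
    by (auto intro!: exI[of _ 1] simp: coeff_1)
  fix a b assume a: "a \<in> PV R v" and b: "b \<in> PV R v"
  then obtain F G where F: "a = poly F v" "\<forall>i. coeff F i \<in> R" and G: "b = poly G v" "\<forall>i. coeff G i \<in> R"
    unfolding PV_def by blast
  show "a + b \<in> PV R v" unfolding PV_def
    using F G sr_add[OF R] by (auto intro!: exI[of _ "F + G"])
  show "a * b \<in> PV R v" unfolding PV_def
    using F G by (auto intro!: exI[of _ "F * G"] simp: coeff_mult intro!: sr_sum[OF R] sr_mult[OF R])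
next
  fix a assume a: "a \<in> PV R v"
  then obtain F where F: "a = poly F v" "\<forall>i. coeff F i \<in> R"
    unfolding PV_def by blast
  show "- a \<in> PV R v" unfolding PV_def
    using F sr_uminus[OF R] by (auto intro!: exI[of _ "- F"])
qed

lemma PV_const: "is_subring R \<Longrightarrow> r \<in> R \<Longrightarrow> r \<in> PV R v"
  unfolding PV_def using sr_0 by (auto intro!: exI[of _ "[:r:]"] simp: coeff_pCons split: nat.splits)

lemma PV_var: "is_subring R \<Longrightarrow> v \<in> PV R v"
  unfolding PV_def using sr_0 sr_1 by (auto intro!: exI[of _ "[:0,1:]"] simp: coeff_pCons split: nat.splits)

lemma ring_gen_PV:
  assumes "is_subring R" "G \<subseteq> R"
  shows "ring_gen (G \<union> {v}) \<subseteq> PV R v"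
proof (rule ring_gen_min)
  show "is_subring (PV R v)" using assms(1) by (rule PV_subring)
  show "G \<union> {v} \<subseteq> PV R v" using assms PV_const[OF assms(1)] PV_var[OF assms(1)] by blast
qed

lemma poly_sum_lt:
  assumes "degree F < N"
  shows "poly F (v::'a::comm_ring_1) = (\<Sum>i<N. coeff F i * v ^ i)"
proof -
  have "poly F v = (\<Sum>i\<le>degree F. coeff F i * v ^ i)" by (rule poly_altdef)
  also have "\<dots> = (\<Sum>i<N. coeff F i * v ^ i)"
    using assms by (intro sum.mono_neutral_left) (auto simp: coeff_eq_0)
  finally show ?thesis .
qed


lemma ZP_subring: "is_subring (ZP P)" unfolding ZP_def by (rule ring_gen_subring)
lemma P_ZP: "P \<subseteq> ZP P" unfolding ZP_def by (rule ring_gen_incl)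
lemma ZP_mono: "P \<subseteq> G \<Longrightarrow> ZP P \<subseteq> ring_gen G" unfolding ZP_def by (rule ring_gen_mono)

lemma two_img: "x ` {1..2::nat} = {x 1, x 2}"
proof -
  have "{1..2::nat} = {1,2}" by auto
  thus ?thesis by simp
qed

lemma poly_ring2: "poly_ring P 2 x = ring_gen (P \<union> {x 1, x 2})"
  unfolding poly_ring_def two_img ..

lemma laurent_ring2: "laurent_ring P 2 x = ring_gen (P \<union> {x 1, x 2} \<union> {inverse (x 1), inverse (x 2)})"
  unfolding laurent_ring_def two_img by (simp add: image_image two_img[of "\<lambda>i. inverse (x i)"])

lemma poly_ring_PV1: "poly_ring P 2 x \<subseteq> PV (ring_gen (P \<union> {x 2})) (x 1)"
proof -
  have "poly_ring P 2 x = ring_gen ((P \<union> {x 2}) \<union> {x 1})" unfolding poly_ring2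
    by (simp add: insert_commute)
  also have "\<dots> \<subseteq> PV (ring_gen (P \<union> {x 2})) (x 1)"
    by (rule ring_gen_PV[OF ring_gen_subring ring_gen_incl])
  finally show ?thesis .
qed

lemma poly_ring_PV2: "poly_ring P 2 x \<subseteq> PV (ring_gen (P \<union> {x 1})) (x 2)"
proof -
  have "poly_ring P 2 x = ring_gen ((P \<union> {x 1}) \<union> {x 2})" unfolding poly_ring2
    by (simp add: insert_commute)
  also have "\<dots> \<subseteq> PV (ring_gen (P \<union> {x 1})) (x 2)"
    by (rule ring_gen_PV[OF ring_gen_subring ring_gen_incl])
  finally show ?thesis .
qed

lemma ZPv_PV: "ring_gen (P \<union> {v}) \<subseteq> PV (ZP P) v"
  by (rule ring_gen_PV[OF ZP_subring P_ZP])

lemma dsum_rep: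
  fixes v w :: "'f::field"
  assumes "\<forall>i. coeff F i \<in> ring_gen (P \<union> {w})"
  shows "\<exists>N c. (\<forall>i j. c i j \<in> ZP P) \<and> degree F < N \<and>
     (\<forall>i\<le>degree F. coeff F i = (\<Sum>j<N. c i j * w ^ j)) \<and>
     poly F v = (\<Sum>i<N. \<Sum>j<N. c i j * (v ^ i * w ^ j))"
proof -
  have "\<forall>i. \<exists>C. coeff F i = poly C w \<and> (\<forall>j. coeff C j \<in> ZP P)"
    using assms ZPv_PV[of P w] unfolding PV_def by blast
  then obtain C where C: "\<And>i. coeff F i = poly (C i) w" "\<And>i j. coeff (C i) j \<in> ZP P"
    by metis
  define N where "N = Suc (degree F + (\<Sum>i\<le>degree F. degree (C i)))"
  define c where "c i j = (if i \<le> degree F then coeff (C i) j else 0)" for i j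
  have dC: "degree (C i) < N" if "i \<le> degree F" for i
  proof -
    have "degree (C i) \<le> (\<Sum>i\<le>degree F. degree (C i))"
      using that by (intro member_le_sum) auto
    thus ?thesis unfolding N_def by simp
  qed
  have cZ: "c i j \<in> ZP P" for i j unfolding c_def using C(2) sr_0[OF ZP_subring] by auto
  have dF: "degree F < N" unfolding N_def by simp
  have co: "coeff F i = (\<Sum>j<N. c i j * w ^ j)" if "i \<le> degree F" for i
    using that C(1)[of i] poly_sum_lt[OF dC[OF that], of w] unfolding c_def by simp
  have co2: "coeff F i * v ^ i = (\<Sum>j<N. c i j * (v ^ i * w ^ j))" for i
  proof (cases "i \<le> degree F")
    case True thus ?thesis using co[OF True] by (simp add: sum_distrib_left sum_distrib_right mult_ac)
  next
    case False thus ?thesis unfolding c_def by (simp add: coeff_eq_0)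
  qed
  have "poly F v = (\<Sum>i<N. coeff F i * v ^ i)" by (rule poly_sum_lt[OF dF])
  also have "\<dots> = (\<Sum>i<N. \<Sum>j<N. c i j * (v ^ i * w ^ j))" using co2 by simp
  finally show ?thesis using cZ dF co by blast
qed

lemma NatU:
  fixes x :: "nat \<Rightarrow> 'f::field"
  assumes ai: "alg_indep P 2 x" and fin: "finite F" and cZ: "\<forall>g\<in>F. c g \<in> ZP P"
    and s: "(\<Sum>g\<in>F. c g * (x 1 ^ fst g * x 2 ^ snd g)) = 0"
  shows "\<forall>g\<in>F. c g = 0"
proof -
  define emb where "emb g = (\<lambda>k::nat. if k = 1 then fst g else if k = 2 then snd g else 0)" for g :: "nat \<times> nat"
  have inj: "inj_on emb F"
  proof
    fix g h assume "emb g = emb h"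
    hence "emb g 1 = emb h 1" "emb g 2 = emb h 2" by auto
    thus "g = h" unfolding emb_def by (simp add: prod_eq_iff)
  qed
  define c' where "c' a = c (a 1, a 2)" for a :: "nat \<Rightarrow> nat"
  have e12: "emb g 1 = fst g" "emb g 2 = snd g" for g unfolding emb_def by auto
  have pr: "(\<Prod>i\<in>{1..2}. x i ^ a i) = x 1 ^ a 1 * x 2 ^ a 2" for a :: "nat \<Rightarrow> nat"
  proof -
    have "{1..2::nat} = {1,2}" by auto
    thus ?thesis by simp
  qed
  have S: "emb ` F \<subseteq> {a. \<forall>i. i \<notin> {1..2} \<longrightarrow> a i = 0}" unfolding emb_def by auto
  have "(\<Sum>a\<in>emb ` F. c' a * (\<Prod>i\<in>{1..2}. x i ^ a i)) = (\<Sum>g\<in>F. c' (emb g) * (\<Prod>i\<in>{1..2}. x i ^ emb g i))"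
    by (rule sum.reindex[OF inj, unfolded comp_def])
  also have "\<dots> = (\<Sum>g\<in>F. c g * (x 1 ^ fst g * x 2 ^ snd g))"
    unfolding pr c'_def e12 by simp
  finally have "(\<Sum>a\<in>emb ` F. c' a * (\<Prod>i\<in>{1..2}. x i ^ a i)) = 0" using s by simp
  moreover have c'emb: "c' (emb g) = c g" for g unfolding c'_def e12 by simp
  moreover have "\<forall>a\<in>emb ` F. c' a \<in> ZP P" using cZ c'emb by auto
  ultimately have "\<forall>a\<in>emb ` F. c' a = 0"
    using ai fin S unfolding alg_indep_def by blast
  thus ?thesis using c'emb by auto
qed

lemma NatU_swap:
  fixes x :: "nat \<Rightarrow> 'f::field"
  assumes ai: "alg_indep P 2 x" and fin: "finite F" and cZ: "\<forall>g\<in>F. c g \<in> ZP P"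
    and s: "(\<Sum>g\<in>F. c g * (x 2 ^ fst g * x 1 ^ snd g)) = 0"
  shows "\<forall>g\<in>F. c g = 0"
proof -
  have "(\<Sum>g\<in>prod.swap ` F. (c \<circ> prod.swap) g * (x 1 ^ fst g * x 2 ^ snd g)) = 0"
    using s by (subst sum.reindex) (auto simp: mult.commute)
  moreover have "finite (prod.swap ` F)" using fin by simp
  moreover have "\<forall>g\<in>prod.swap ` F. (c \<circ> prod.swap) g \<in> ZP P" using cZ by auto
  ultimately have h: "\<forall>g\<in>prod.swap ` F. (c \<circ> prod.swap) g = 0"
    using NatU[OF ai] by blast
  show ?thesis
  proof
    fix g assume "g \<in> F"
    hence "prod.swap g \<in> prod.swap ` F" by blast
    hence "(c \<circ> prod.swap) (prod.swap g) = 0" using h by blast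
    thus "c g = 0" by simp
  qed
qed

lemma sum_cart: "(\<Sum>g\<in>A\<times>B. h (fst g) (snd g)) = (\<Sum>i\<in>A. \<Sum>j\<in>B. h i j)"
  by (simp add: sum.cartesian_product split_def)

lemma dsum_indep:
  assumes "alg_indep P 2 x" "\<forall>i j. c i j \<in> ZP P"
  shows "(\<Sum>i<N. \<Sum>j<N. c i j * (x 1 ^ i * x 2 ^ j)) = 0 \<Longrightarrow> \<forall>i<N. \<forall>j<N. c i j = 0"
    and "(\<Sum>i<N. \<Sum>j<N. c i j * (x 2 ^ i * x 1 ^ j)) = 0 \<Longrightarrow> \<forall>i<N. \<forall>j<N. c i j = 0"
proof -
  assume "(\<Sum>i<N. \<Sum>j<N. c i j * (x 1 ^ i * x 2 ^ j)) = 0"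
  hence "(\<Sum>g\<in>{..<N}\<times>{..<N}. (\<lambda>g. c (fst g) (snd g)) g * (x 1 ^ fst g * x 2 ^ snd g)) = 0"
    by (subst sum_cart) simp
  from NatU[OF assms(1) _ _ this] assms(2) show "\<forall>i<N. \<forall>j<N. c i j = 0" by auto
next
  assume "(\<Sum>i<N. \<Sum>j<N. c i j * (x 2 ^ i * x 1 ^ j)) = 0"
  hence "(\<Sum>g\<in>{..<N}\<times>{..<N}. (\<lambda>g. c (fst g) (snd g)) g * (x 2 ^ fst g * x 1 ^ snd g)) = 0"
    by (subst sum_cart) simp
  from NatU_swap[OF assms(1) _ _ this] assms(2) show "\<forall>i<N. \<forall>j<N. c i j = 0" by auto
qed

definition transc_over :: "'f::field set \<Rightarrow> 'f \<Rightarrow> bool" where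
  "transc_over R v \<longleftrightarrow> (\<forall>F. (\<forall>i. coeff F i \<in> R) \<longrightarrow> poly F v = 0 \<longrightarrow> F = 0)"

lemma transc_gen:
  fixes v w :: "'f::field"
  assumes ind: "\<And>N c. \<forall>i j. c i j \<in> ZP P \<Longrightarrow> (\<Sum>i<N. \<Sum>j<N. c i j * (v ^ i * w ^ j)) = 0 \<Longrightarrow> \<forall>i<N. \<forall>j<N. c i j = 0"
  shows "transc_over (ring_gen (P \<union> {w})) v"
  unfolding transc_over_def
proof (intro allI impI)
  fix F :: "'f poly"
  assume co: "\<forall>i. coeff F i \<in> ring_gen (P \<union> {w})" and z: "poly F v = 0"
  obtain N c where N: "\<forall>i j. c i j \<in> ZP P" "degree F < N"
     "\<forall>i\<le>degree F. coeff F i = (\<Sum>j<N. c i j * w ^ j)"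
     "poly F v = (\<Sum>i<N. \<Sum>j<N. c i j * (v ^ i * w ^ j))"
    using dsum_rep[OF co, of v] by blast
  have "\<forall>i<N. \<forall>j<N. c i j = 0" using ind[OF N(1)] N(4) z by simp
  hence "coeff F (degree F) = 0" using N(2,3) by simp
  thus "F = 0" by simp
qed

lemma transc1: "alg_indep P 2 x \<Longrightarrow> transc_over (ring_gen (P \<union> {x 2})) (x 1)"
  by (rule transc_gen) (rule dsum_indep(1))

lemma transc2: "alg_indep P 2 x \<Longrightarrow> transc_over (ring_gen (P \<union> {x 1})) (x 2)"
  by (rule transc_gen) (rule dsum_indep(2))

lemma transc_mono: "transc_over R v \<Longrightarrow> R0 \<subseteq> R \<Longrightarrow> transc_over R0 v"
  unfolding transc_over_def by blast

lemma transc_ZP2: "alg_indep P 2 x \<Longrightarrow> transc_over (ZP P) (x 2)"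
  by (rule transc_mono[OF transc2 ZP_mono]) auto

lemma transc_ZP1: "alg_indep P 2 x \<Longrightarrow> transc_over (ZP P) (x 1)"
  by (rule transc_mono[OF transc1 ZP_mono]) auto

lemma coeffs_diff: "is_subring R \<Longrightarrow> \<forall>i. coeff F i \<in> R \<Longrightarrow> \<forall>i. coeff G i \<in> R \<Longrightarrow> \<forall>i. coeff (F - G) i \<in> R"
  by (simp add: sr_diff)

lemma coeffs_mult: "is_subring R \<Longrightarrow> \<forall>i. coeff F i \<in> R \<Longrightarrow> \<forall>i. coeff G i \<in> R \<Longrightarrow> \<forall>i. coeff (F * G) i \<in> R"
  by (auto simp: coeff_mult intro!: sr_sum sr_mult)

lemma coeffs_const: "is_subring R \<Longrightarrow> c \<in> R \<Longrightarrow> \<forall>i. coeff [:c:] i \<in> R"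
  by (auto simp: coeff_pCons sr_0 split: nat.splits)

lemma DEG:
  assumes R: "is_subring R" and tr: "transc_over R v"
    and a: "a \<in> PV R v" and b: "b \<in> PV R v" and ab: "a * b = c" and c: "c \<in> R" "c \<noteq> 0"
  shows "a \<in> R \<and> b \<in> R"
proof -
  obtain A where A: "a = poly A v" "\<forall>i. coeff A i \<in> R" using a unfolding PV_def by blast
  obtain Bp where Bp: "b = poly Bp v" "\<forall>i. coeff Bp i \<in> R" using b unfolding PV_def by blast
  have "poly (A * Bp - [:c:]) v = 0" using A Bp ab by simp
  moreover have "\<forall>i. coeff (A * Bp - [:c:]) i \<in> R"
    using coeffs_diff[OF R coeffs_mult[OF R A(2) Bp(2)] coeffs_const[OF R c(1)]] .
  ultimately have "A * Bp - [:c:] = 0" using tr unfolding transc_over_def by blast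
  hence e: "A * Bp = [:c:]" by simp
  hence "A \<noteq> 0" "Bp \<noteq> 0" using c(2) by auto
  hence "degree A = 0" "degree Bp = 0" using e degree_mult_eq[of A Bp] by auto
  hence "a = coeff A 0" "b = coeff Bp 0" using A(1) Bp(1) by (auto elim!: degree_eq_zeroE)
  thus ?thesis using A(2) Bp(2) by simp
qed

lemma BOTH:
  assumes R: "is_subring R" and tr: "transc_over R v" and sub: "R0 \<subseteq> R"
    and a: "a \<in> PV R0 v" and aR: "a \<in> R"
  shows "a \<in> R0"
proof -
  obtain A where A: "a = poly A v" "\<forall>i. coeff A i \<in> R0" using a unfolding PV_def by blast
  have "poly (A - [:a:]) v = 0" using A by simp
  moreover have "\<forall>i. coeff (A - [:a:]) i \<in> R"
    using coeffs_diff[OF R _ coeffs_const[OF R aR]] A(2) sub by blast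
  ultimately have "A - [:a:] = 0" using tr unfolding transc_over_def by blast
  hence "A = [:a:]" by simp
  thus ?thesis using A(2)[rule_format, of 0] by simp
qed


lemma alg_indep_nz:
  assumes ai: "alg_indep P 2 x"
  shows "x 1 \<noteq> 0" "x 2 \<noteq> 0"
proof -
  have one: "(1::'a) \<in> ZP P" by (rule sr_1[OF ZP_subring])
  show "x 1 \<noteq> 0"
  proof
    assume "x 1 = 0"
    have "(\<Sum>g\<in>{(1::nat,0::nat)}. (\<lambda>_. 1) g * (x 1 ^ fst g * x 2 ^ snd g)) = x 1" by simp
    hence "(\<Sum>g\<in>{(1::nat,0::nat)}. (\<lambda>_. 1) g * (x 1 ^ fst g * x 2 ^ snd g)) = 0" using \<open>x 1 = 0\<close> by simp
    from NatU[OF ai _ _ this] one show False by simp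
  qed
  show "x 2 \<noteq> 0"
  proof
    assume "x 2 = 0"
    have "(\<Sum>g\<in>{(0::nat,1::nat)}. (\<lambda>_. 1) g * (x 1 ^ fst g * x 2 ^ snd g)) = x 2" by simp
    hence "(\<Sum>g\<in>{(0::nat,1::nat)}. (\<lambda>_. 1) g * (x 1 ^ fst g * x 2 ^ snd g)) = 0" using \<open>x 2 = 0\<close> by simp
    from NatU[OF ai _ _ this] one show False by simp
  qed
qed

lemma powi_shift:
  fixes z :: "'f::field"
  assumes "z \<noteq> 0" "i + int K \<ge> 0"
  shows "z powi i * z ^ K = z ^ nat (i + int K)"
proof -
  have "z powi i * z ^ K = z powi i * z powi (int K)" by simp
  also have "\<dots> = z powi (i + int K)" using assms(1) by (simp add: power_int_add)
  also have "\<dots> = z powi (int (nat (i + int K)))" using assms(2) by simp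
  also have "\<dots> = z ^ nat (i + int K)" by (rule power_int_of_nat)
  finally show ?thesis .
qed

lemma UL:
  fixes x :: "nat \<Rightarrow> 'f::field" and F :: "(int \<times> int) set"
  assumes ai: "alg_indep P 2 x" and fin: "finite F" and w: "w \<noteq> 0"
    and cZ: "\<forall>g\<in>F. w * c g \<in> ZP P"
    and s: "(\<Sum>g\<in>F. c g * (x 1 powi fst g * x 2 powi snd g)) = 0"
  shows "\<forall>g\<in>F. c g = 0"
proof -
  have nz: "x 1 \<noteq> 0" "x 2 \<noteq> 0" using alg_indep_nz[OF ai] by auto
  define K where "K = nat (\<Sum>g\<in>F. \<bar>fst g\<bar> + \<bar>snd g\<bar>)"
  have Kb: "fst g + int K \<ge> 0 \<and> snd g + int K \<ge> 0" if "g \<in> F" for g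
  proof -
    have "\<bar>fst g\<bar> + \<bar>snd g\<bar> \<le> (\<Sum>g\<in>F. \<bar>fst g\<bar> + \<bar>snd g\<bar>)"
      using fin that by (intro member_le_sum) auto
    hence "\<bar>fst g\<bar> + \<bar>snd g\<bar> \<le> int K" unfolding K_def by linarith
    thus ?thesis by linarith
  qed
  define h where "h g = (nat (fst g + int K), nat (snd g + int K))" for g :: "int \<times> int"
  have inj: "inj_on h F"
  proof
    fix g g' assume g: "g \<in> F" "g' \<in> F" "h g = h g'"
    thus "g = g'" using Kb[OF g(1)] Kb[OF g(2)] unfolding h_def by (auto simp: prod_eq_iff)
  qed
  define c' where "c' q = w * c (inv_into F h q)" for q
  have tm: "c' (h g) * (x 1 ^ fst (h g) * x 2 ^ snd (h g)) =
      (w * (x 1 ^ K * x 2 ^ K)) * (c g * (x 1 powi fst g * x 2 powi snd g))" if "g \<in> F" for g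
  proof -
    have "inv_into F h (h g) = g" using inj that by (simp add: inv_into_f_f)
    moreover have "x 1 ^ fst (h g) = x 1 powi fst g * x 1 ^ K"
      using powi_shift[OF nz(1)] Kb[OF that] unfolding h_def by simp
    moreover have "x 2 ^ snd (h g) = x 2 powi snd g * x 2 ^ K"
      using powi_shift[OF nz(2)] Kb[OF that] unfolding h_def by simp
    ultimately show ?thesis unfolding c'_def by (simp add: mult_ac)
  qed
  have "(\<Sum>q\<in>h ` F. c' q * (x 1 ^ fst q * x 2 ^ snd q)) = (\<Sum>g\<in>F. c' (h g) * (x 1 ^ fst (h g) * x 2 ^ snd (h g)))"
    by (rule sum.reindex[OF inj, unfolded comp_def])
  also have "\<dots> = (\<Sum>g\<in>F. (w * (x 1 ^ K * x 2 ^ K)) * (c g * (x 1 powi fst g * x 2 powi snd g)))"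
    using tm by (rule sum.cong[OF refl])
  also have "\<dots> = 0" using s by (simp add: sum_distrib_left[symmetric])
  finally have z: "(\<Sum>q\<in>h ` F. c' q * (x 1 ^ fst q * x 2 ^ snd q)) = 0" .
  have "\<forall>q\<in>h ` F. c' q \<in> ZP P" unfolding c'_def using cZ by (auto simp: inv_into_into)
  hence "\<forall>q\<in>h ` F. c' q = 0" using NatU[OF ai _ _ z] fin by blast
  show ?thesis
  proof
    fix g assume g: "g \<in> F"
    hence "c' (h g) = 0" using \<open>\<forall>q\<in>h ` F. c' q = 0\<close> by blast
    moreover have "c' (h g) = w * c g" unfolding c'_def using inj g by (simp add: inv_into_f_f)
    ultimately show "c g = 0" using w by simp
  qed
qed


lemma laurent_poly:
  fixes x :: "nat \<Rightarrow> 'f::field"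
  assumes nz: "x 1 \<noteq> 0" "x 2 \<noteq> 0" and f: "f \<in> laurent_ring P 2 x"
  shows "\<exists>K. (x 1 * x 2) ^ K * f \<in> poly_ring P 2 x"
proof -
  define G where "G = P \<union> {x 1, x 2}"
  have Q: "poly_ring P 2 x = ring_gen G" unfolding G_def by (rule poly_ring2)
  define S where "S = {f. \<exists>K. (x 1 * x 2) ^ K * f \<in> ring_gen G}"
  have xQ: "x 1 \<in> ring_gen G" "x 2 \<in> ring_gen G" unfolding G_def by (rule rg_gen, simp)+
  have x12: "(x 1 * x 2) ^ n \<in> ring_gen G" for n using xQ by (intro rg_power rg_mult)
  have inS: "(x 1 * x 2) ^ K * a \<in> ring_gen G \<Longrightarrow> a \<in> S" for K a unfolding S_def by blast
  have "is_subring S" unfolding is_subring_def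
  proof (intro conjI ballI)
    show "0 \<in> S" by (rule inS[of 0]) (simp add: rg_0)
    show "1 \<in> S" by (rule inS[of 0]) (simp add: rg_1)
    fix a b assume "a \<in> S" "b \<in> S"
    then obtain Ka Kb where K: "(x 1 * x 2) ^ Ka * a \<in> ring_gen G" "(x 1 * x 2) ^ Kb * b \<in> ring_gen G" unfolding S_def by blast
    have "(x 1 * x 2) ^ (Ka + Kb) * (a + b) = (x 1 * x 2) ^ Kb * ((x 1 * x 2) ^ Ka * a) + (x 1 * x 2) ^ Ka * ((x 1 * x 2) ^ Kb * b)"
      by (simp add: power_add algebra_simps)
    also have "\<dots> \<in> ring_gen G" by (rule rg_add[OF rg_mult[OF x12 K(1)] rg_mult[OF x12 K(2)]])
    finally show "a + b \<in> S" by (rule inS)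
    have "(x 1 * x 2) ^ (Ka + Kb) * (a * b) = ((x 1 * x 2) ^ Ka * a) * ((x 1 * x 2) ^ Kb * b)"
      by (simp add: power_add algebra_simps)
    also have "\<dots> \<in> ring_gen G" by (rule rg_mult[OF K(1) K(2)])
    finally show "a * b \<in> S" by (rule inS)
  next
    fix a assume "a \<in> S"
    then obtain Ka where K: "(x 1 * x 2) ^ Ka * a \<in> ring_gen G" unfolding S_def by blast
    have "(x 1 * x 2) ^ Ka * (- a) = - ((x 1 * x 2) ^ Ka * a)" by simp
    also have "\<dots> \<in> ring_gen G" by (rule rg_uminus[OF K])
    finally show "- a \<in> S" by (rule inS)
  qed
  moreover have "P \<union> {x 1, x 2} \<union> {inverse (x 1), inverse (x 2)} \<subseteq> S"
  proof -
    have "p \<in> S" if "p \<in> P \<union> {x 1, x 2}" for p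
    proof -
      have "p \<in> ring_gen G" using that unfolding G_def by (rule rg_gen)
      thus ?thesis using inS[of 0 p] by simp
    qed
    moreover have "inverse (x 1) \<in> S"
    proof -
      have e: "(x 1 * x 2) ^ 1 * inverse (x 1) = x 2" using nz by simp
      show ?thesis by (rule inS[of 1], subst e, rule xQ(2))
    qed
    moreover have "inverse (x 2) \<in> S"
    proof -
      have e: "(x 1 * x 2) ^ 1 * inverse (x 2) = x 1" using nz by simp
      show ?thesis by (rule inS[of 1], subst e, rule xQ(1))
    qed
    ultimately show ?thesis by blast
  qed
  ultimately have "laurent_ring P 2 x \<subseteq> S" unfolding laurent_ring2 by (rule ring_gen_min)
  thus ?thesis using f unfolding S_def Q by blast
qed


definition Box :: "nat \<Rightarrow> (int \<times> int) set" where
  "Box M = {-int M..int M} \<times> {-int M..int M}"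

lemma finite_Box: "finite (Box M)" unfolding Box_def by simp

definition LS :: "(nat \<Rightarrow> 'f::field) \<Rightarrow> (int \<times> int \<Rightarrow> 'f) \<Rightarrow> (int \<times> int) set \<Rightarrow> 'f" where
  "LS x c F = (\<Sum>g\<in>F. c g * (x 1 powi fst g * x 2 powi snd g))"

lemma laurent_rep:
  fixes x :: "nat \<Rightarrow> 'f::field"
  assumes nz: "x 1 \<noteq> 0" "x 2 \<noteq> 0" and f: "f \<in> laurent_ring P 2 x"
  shows "\<exists>N0. \<forall>M\<ge>N0. \<exists>c. (\<forall>g. c g \<in> ZP P) \<and> f = LS x c (Box M)"
proof -
  obtain K where K: "(x 1 * x 2) ^ K * f \<in> poly_ring P 2 x" using laurent_poly[OF nz f] by blast
  then obtain F where F: "(x 1 * x 2) ^ K * f = poly F (x 1)" "\<forall>i. coeff F i \<in> ring_gen (P \<union> {x 2})"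
    using poly_ring_PV1[of P x] unfolding PV_def by blast
  obtain N c where Nc: "\<forall>i j. c i j \<in> ZP P" "poly F (x 1) = (\<Sum>i<N. \<Sum>j<N. c i j * (x 1 ^ i * x 2 ^ j))"
    using dsum_rep[OF F(2), of "x 1"] by blast
  have Z0: "0 \<in> ZP P" by (rule sr_0[OF ZP_subring])
  show ?thesis
  proof (rule exI[of _ "K + N"], intro allI impI)
    fix M assume M: "K + N \<le> M"
    define ok where "ok a = (0 \<le> a + int K \<and> a + int K < int N)" for a :: int
    define c' where "c' g = (if ok (fst g) \<and> ok (snd g) then c (nat (fst g + int K)) (nat (snd g + int K)) else 0)" for g
    define \<phi> where "\<phi> q = (int (fst q) - int K, int (snd q) - int K)" for q :: "nat \<times> nat"
    have inj: "inj_on \<phi> ({..<N} \<times> {..<N})" unfolding \<phi>_def by (auto simp: inj_on_def)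
    have sub: "\<phi> ` ({..<N} \<times> {..<N}) \<subseteq> Box M" using M unfolding \<phi>_def Box_def by auto
    have out: "c' g * (x 1 powi fst g * x 2 powi snd g) = 0" if "g \<in> Box M - \<phi> ` ({..<N} \<times> {..<N})" for g
    proof -
      have nok: "\<not> (ok (fst g) \<and> ok (snd g))"
      proof
        assume a: "ok (fst g) \<and> ok (snd g)"
        have "g = \<phi> (nat (fst g + int K), nat (snd g + int K))" using a unfolding \<phi>_def ok_def by auto
        moreover have "(nat (fst g + int K), nat (snd g + int K)) \<in> {..<N} \<times> {..<N}" using a unfolding ok_def by auto
        ultimately show False using that by blast
      qed
      have "c' g = 0" unfolding c'_def using nok by (rule if_not_P)
      thus ?thesis by simp
    qed
    have inn: "c' (\<phi> q) * (x 1 powi fst (\<phi> q) * x 2 powi snd (\<phi> q)) = inverse ((x 1 * x 2) ^ K) * (c (fst q) (snd q) * (x 1 ^ fst q * x 2 ^ snd q))"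
      if "q \<in> {..<N} \<times> {..<N}" for q
    proof -
      have "ok (fst (\<phi> q)) \<and> ok (snd (\<phi> q))" using that unfolding ok_def \<phi>_def by auto
      hence "c' (\<phi> q) = c (fst q) (snd q)" unfolding c'_def \<phi>_def by simp
      moreover have "x 1 powi (int (fst q) - int K) = x 1 ^ fst q * inverse (x 1 ^ K)"
        using nz by (simp add: power_int_diff field_simps)
      moreover have "x 2 powi (int (snd q) - int K) = x 2 ^ snd q * inverse (x 2 ^ K)"
        using nz by (simp add: power_int_diff field_simps)
      ultimately show ?thesis unfolding \<phi>_def by (simp add: power_mult_distrib field_simps)
    qed
    have "LS x c' (Box M) = (\<Sum>g\<in>\<phi> ` ({..<N} \<times> {..<N}). c' g * (x 1 powi fst g * x 2 powi snd g))"
      unfolding LS_def using out sub finite_Box by (intro sum.mono_neutral_right) auto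
    also have "\<dots> = (\<Sum>q\<in>{..<N} \<times> {..<N}. c' (\<phi> q) * (x 1 powi fst (\<phi> q) * x 2 powi snd (\<phi> q)))"
      by (rule sum.reindex[OF inj, unfolded comp_def])
    also have "\<dots> = (\<Sum>q\<in>{..<N} \<times> {..<N}. inverse ((x 1 * x 2) ^ K) * (c (fst q) (snd q) * (x 1 ^ fst q * x 2 ^ snd q)))"
      using inn by (rule sum.cong[OF refl])
    also have "\<dots> = inverse ((x 1 * x 2) ^ K) * (\<Sum>i<N. \<Sum>j<N. c i j * (x 1 ^ i * x 2 ^ j))"
      using sum_cart[of "\<lambda>i j. c i j * (x 1 ^ i * x 2 ^ j)" "{..<N}" "{..<N}"]
      by (simp add: sum_distrib_left[symmetric])
    also have "\<dots> = f" using F(1) Nc(2) nz by (simp add: field_simps)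
    finally have "f = LS x c' (Box M)" by simp
    moreover have "\<forall>g. c' g \<in> ZP P" unfolding c'_def using Nc(1) Z0 by auto
    ultimately show "\<exists>c. (\<forall>g. c g \<in> ZP P) \<and> f = LS x c (Box M)" by blast
  qed
qed


locale SF =
  fixes P :: "'f::field set" and sp :: "'f \<Rightarrow> 'f \<Rightarrow> 'f"
  assumes sf: "semifield_in P sp"
begin

lemma one: "1 \<in> P" using sf unfolding semifield_in_def by blast
lemma nz: "p \<in> P \<Longrightarrow> p \<noteq> 0" using sf unfolding semifield_in_def by blast
lemma mul: "a \<in> P \<Longrightarrow> b \<in> P \<Longrightarrow> a * b \<in> P" using sf unfolding semifield_in_def by blast
lemma inv: "a \<in> P \<Longrightarrow> inverse a \<in> P" using sf unfolding semifield_in_def by blast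
lemma pl: "a \<in> P \<Longrightarrow> b \<in> P \<Longrightarrow> sp a b \<in> P" using sf unfolding semifield_in_def by blast
lemma comm: "a \<in> P \<Longrightarrow> b \<in> P \<Longrightarrow> sp a b = sp b a" using sf unfolding semifield_in_def by blast
lemma assoc: "a \<in> P \<Longrightarrow> b \<in> P \<Longrightarrow> c \<in> P \<Longrightarrow> sp (sp a b) c = sp a (sp b c)"
  using sf unfolding semifield_in_def by blast
lemma distr: "a \<in> P \<Longrightarrow> b \<in> P \<Longrightarrow> c \<in> P \<Longrightarrow> sp a b * c = sp (a * c) (b * c)"
  using sf unfolding semifield_in_def by blast
lemma pw: "a \<in> P \<Longrightarrow> a ^ n \<in> P" by (induction n) (auto intro: one mul)
lemma dvd: "a \<in> P \<Longrightarrow> b \<in> P \<Longrightarrow> a / b \<in> P" by (simp add: divide_inverse mul inv)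

fun sS :: "'f \<Rightarrow> nat \<Rightarrow> 'f" where
  "sS p 0 = 1" | "sS p (Suc k) = sp (sS p k) (p ^ Suc k)"
fun sT :: "'f \<Rightarrow> nat \<Rightarrow> 'f" where
  "sT p 0 = p" | "sT p (Suc k) = sp (sT p k) (p ^ Suc (Suc k))"

lemma sS_P: "p \<in> P \<Longrightarrow> sS p k \<in> P" by (induction k) (auto intro: one pl pw simp del: power_Suc)
lemma sT_P: "p \<in> P \<Longrightarrow> sT p k \<in> P" by (induction k) (auto intro: pl pw simp del: power_Suc)
lemma sS_T: "p \<in> P \<Longrightarrow> sS p (Suc k) = sp 1 (sT p k)"
proof (induction k)
  case 0 thus ?case by simp
next
  case (Suc k)
  have "sS p (Suc (Suc k)) = sp (sp 1 (sT p k)) (p ^ Suc (Suc k))" using Suc by simp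
  also have "\<dots> = sp 1 (sT p (Suc k))" using Suc.prems by (simp del: power_Suc add: assoc one sT_P pw)
  finally show ?case .
qed
lemma sS_mul: "p \<in> P \<Longrightarrow> sS p k * p = sT p k"
proof (induction k)
  case 0 thus ?case by simp
next
  case (Suc k)
  have "sS p (Suc k) * p = sp (sS p k * p) (p ^ Suc k * p)"
    using Suc.prems by (simp del: power_Suc add: distr sS_P pw)
  also have "\<dots> = sT p (Suc k)" using Suc by (simp del: power_Suc add: power_Suc2[symmetric])
  finally show ?case .
qed

lemma torsion_free:
  assumes p: "p \<in> P" and n: "n > 0" and e: "p ^ n = 1"
  shows "p = 1"
proof (cases n)
  case 0 thus ?thesis using n by simp
next
  case (Suc k)
  show ?thesis
  proof (cases k)
    case 0 thus ?thesis using e Suc by simp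
  next
    case (Suc j)
    have "sT p (Suc j) = sp (sT p j) (p ^ Suc (Suc j))" by (simp only: sT.simps)
    also have "\<dots> = sp (sT p j) 1" using e \<open>n = Suc k\<close> Suc by (simp del: power_Suc)
    also have "\<dots> = sp 1 (sT p j)" using p by (simp add: comm one sT_P)
    also have "\<dots> = sS p (Suc j)" using sS_T[OF p] by simp
    finally have "sS p (Suc j) * p = sS p (Suc j) * 1" using sS_mul[OF p, of "Suc j"] by simp
    thus ?thesis using nz[OF sS_P[OF p]] by (metis mult_left_cancel)
  qed
qed

definition cone :: "'f set \<Rightarrow> bool" where
  "cone C \<longleftrightarrow> C \<subseteq> P \<and> (\<forall>a\<in>C. \<forall>b\<in>C. a * b \<in> C) \<and> 1 \<notin> C"

lemma cone_pow: "cone C \<Longrightarrow> c \<in> C \<Longrightarrow> k > 0 \<Longrightarrow> c ^ k \<in> C"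
proof (induction k)
  case 0 thus ?case by simp
next
  case (Suc k) thus ?case unfolding cone_def by (cases k) auto
qed

lemma max_cone_aux:
  assumes M: "cone M" and max: "\<forall>X. cone X \<longrightarrow> M \<subseteq> X \<longrightarrow> X = M"
    and h: "h \<in> P" "h \<noteq> 1" "h \<notin> M"
  shows "\<exists>k>0. inverse h ^ k \<in> M"
proof -
  define M' where "M' = {h ^ k * c | k c. c \<in> M \<or> (c = 1 \<and> k > 0)}"
  have MP: "M \<subseteq> P" using M unfolding cone_def by blast
  have sub: "M \<subseteq> M'" unfolding M'_def by (force intro: exI[of _ 0])
  have hM': "h \<in> M'" unfolding M'_def by (force intro: exI[of _ 1])
  have P': "M' \<subseteq> P" unfolding M'_def using MP h(1) by (auto intro!: mul pw one)
  have cl: "\<forall>a\<in>M'. \<forall>b\<in>M'. a * b \<in> M'"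
  proof (intro ballI)
    fix a b assume "a \<in> M'" "b \<in> M'"
    then obtain k c k' c' where a: "a = h ^ k * c" "c \<in> M \<or> (c = 1 \<and> k > 0)"
      and b: "b = h ^ k' * c'" "c' \<in> M \<or> (c' = 1 \<and> k' > 0)" unfolding M'_def by blast
    have ab: "a * b = h ^ (k + k') * (c * c')" using a b by (simp add: power_add mult_ac)
    have "c * c' \<in> M \<or> (c * c' = 1 \<and> k + k' > 0)"
      using a(2) b(2) M unfolding cone_def by auto
    thus "a * b \<in> M'" unfolding M'_def ab by blast
  qed
  have "M' \<noteq> M" using hM' h(3) by blast
  hence "\<not> cone M'" using max sub by blast
  hence "1 \<in> M'" using P' cl unfolding cone_def by blast
  then obtain k c where kc: "1 = h ^ k * c" "c \<in> M \<or> (c = 1 \<and> k > 0)" unfolding M'_def by blast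
  show ?thesis
  proof (cases "c \<in> M")
    case True
    have hk: "h ^ k \<noteq> 0" using nz[OF h(1)] by simp
    have "c = inverse (h ^ k)" using kc(1) hk by (simp add: field_simps)
    hence c: "c = inverse h ^ k" by (simp add: power_inverse)
    show ?thesis
    proof (cases "k = 0")
      case True
      hence "c = 1" using c by simp
      thus ?thesis using M \<open>c \<in> M\<close> unfolding cone_def by blast
    next
      case False thus ?thesis using c True by blast
    qed
  next
    case False
    hence "h ^ k = 1" "k > 0" using kc by auto
    hence "h = 1" using torsion_free h(1) by blast
    thus ?thesis using h(2) by blast
  qed
qed

lemma exists_order:
  "\<exists>C. cone C \<and> (\<forall>g\<in>P. g \<noteq> 1 \<longrightarrow> g \<in> C \<or> inverse g \<in> C)"
proof -
  define A where "A = {C. cone C}"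
  have "\<forall>C\<in>chains A. \<Union>C \<in> A"
  proof
    fix C assume C: "C \<in> chains A"
    hence ch: "\<forall>X\<in>C. \<forall>Y\<in>C. X \<subseteq> Y \<or> Y \<subseteq> X" "\<forall>X\<in>C. cone X"
      unfolding chains_def chain_subset_def A_def by auto
    have "\<forall>a\<in>\<Union>C. \<forall>b\<in>\<Union>C. a * b \<in> \<Union>C"
    proof (intro ballI)
      fix a b assume "a \<in> \<Union>C" "b \<in> \<Union>C"
      then obtain X Y where "X \<in> C" "Y \<in> C" "a \<in> X" "b \<in> Y" by blast
      thus "a * b \<in> \<Union>C" using ch unfolding cone_def by (metis UnionI subsetD)
    qed
    thus "\<Union>C \<in> A" using ch(2) unfolding A_def cone_def by blast
  qed
  then obtain M where M: "M \<in> A" "\<forall>X\<in>A. M \<subseteq> X \<longrightarrow> X = M" using Zorn_Lemma by blast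
  have cM: "cone M" using M(1) unfolding A_def by simp
  have mx: "\<forall>X. cone X \<longrightarrow> M \<subseteq> X \<longrightarrow> X = M" using M(2) unfolding A_def by simp
  have "g \<in> M \<or> inverse g \<in> M" if g: "g \<in> P" "g \<noteq> 1" for g
  proof (rule ccontr)
    assume "\<not> (g \<in> M \<or> inverse g \<in> M)"
    hence n: "g \<notin> M" "inverse g \<notin> M" by auto
    obtain k where k: "k > 0" "inverse g ^ k \<in> M" using max_cone_aux[OF cM mx g n(1)] by blast
    have ig: "inverse g \<in> P" "inverse g \<noteq> 1" using g inv by auto
    obtain l where l: "l > 0" "inverse (inverse g) ^ l \<in> M" using max_cone_aux[OF cM mx ig n(2)] by blast
    have a: "(inverse g ^ k) ^ l \<in> M" using cone_pow[OF cM k(2) l(1)] .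
    have b: "(g ^ l) ^ k \<in> M" using cone_pow[OF cM _ k(1)] l(2) by simp
    have "(inverse g ^ k) ^ l * (g ^ l) ^ k = 1"
      using nz[OF g(1)] by (simp add: power_inverse power_mult[symmetric] mult.commute)
    hence "1 \<in> M" using a b cM unfolding cone_def by metis
    thus False using cM unfolding cone_def by blast
  qed
  thus ?thesis using cM by blast
qed

end


context SF
begin

lemma ext_sum:
  assumes "finite A" "S \<subseteq> A"
  shows "(\<Sum>p\<in>A. of_int (if p \<in> S then m p else 0) * (p::'f)) = (\<Sum>p\<in>S. of_int (m p) * p)"
proof -
  have "(\<Sum>p\<in>A. of_int (if p \<in> S then m p else 0) * p) = (\<Sum>p\<in>A. if p \<in> S then of_int (m p) * p else 0)"
    by (rule sum.cong) auto
  also have "\<dots> = (\<Sum>p\<in>A \<inter> S. of_int (m p) * p)" using assms(1) by (rule sum.inter_restrict[symmetric])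
  also have "A \<inter> S = S" using assms(2) by blast
  finally show ?thesis .
qed

lemma prod_group:
  fixes m1 m2 :: "'f \<Rightarrow> int"
  assumes A: "finite S1" "finite S2"
  shows "(\<Sum>p\<in>S1. of_int (m1 p) * p) * (\<Sum>q\<in>S2. of_int (m2 q) * q) =
    (\<Sum>r\<in>(\<lambda>g. fst g * snd g) ` (S1 \<times> S2). of_int (\<Sum>g\<in>{g \<in> S1 \<times> S2. fst g * snd g = r}. m1 (fst g) * m2 (snd g)) * r)"
proof -
  define f where "f g = fst g * snd g" for g :: "'f \<times> 'f"
  define h where "h g = m1 (fst g) * m2 (snd g)" for g :: "'f \<times> 'f"
  have "(\<Sum>p\<in>S1. of_int (m1 p) * p) * (\<Sum>q\<in>S2. of_int (m2 q) * q) = (\<Sum>p\<in>S1. \<Sum>q\<in>S2. of_int (m1 p) * p * (of_int (m2 q) * q))"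
    by (rule sum_product)
  also have "\<dots> = (\<Sum>g\<in>S1 \<times> S2. of_int (m1 (fst g)) * fst g * (of_int (m2 (snd g)) * snd g))"
    by (rule sum_cart[symmetric])
  also have "\<dots> = (\<Sum>g\<in>S1 \<times> S2. of_int (h g) * f g)"
    unfolding h_def f_def by (intro sum.cong refl) (simp add: mult_ac)
  also have "\<dots> = (\<Sum>r\<in>f ` (S1 \<times> S2). \<Sum>g\<in>{g \<in> S1 \<times> S2. f g = r}. of_int (h g) * f g)"
    using A by (intro sum.group[symmetric]) auto
  also have "\<dots> = (\<Sum>r\<in>f ` (S1 \<times> S2). of_int (\<Sum>g\<in>{g \<in> S1 \<times> S2. f g = r}. h g) * r)"
  proof (intro sum.cong refl)
    fix r
    have "(\<Sum>g\<in>{g \<in> S1 \<times> S2. f g = r}. of_int (h g) * f g) = (\<Sum>g\<in>{g \<in> S1 \<times> S2. f g = r}. of_int (h g) * r)"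
      by (intro sum.cong refl) simp
    also have "\<dots> = of_int (\<Sum>g\<in>{g \<in> S1 \<times> S2. f g = r}. h g) * r"
      by (simp only: sum_distrib_right of_int_sum)
    finally show "(\<Sum>g\<in>{g \<in> S1 \<times> S2. f g = r}. of_int (h g) * f g) = of_int (\<Sum>g\<in>{g \<in> S1 \<times> S2. f g = r}. h g) * r" .
  qed
  finally show ?thesis unfolding f_def h_def .
qed

definition Zs :: "'f set" where
  "Zs = {u. \<exists>S m. finite S \<and> S \<subseteq> P \<and> u = (\<Sum>p\<in>S. of_int (m p) * p)}"

lemma ZsI: "finite S \<Longrightarrow> S \<subseteq> P \<Longrightarrow> u = (\<Sum>p\<in>S. of_int (m p) * p) \<Longrightarrow> u \<in> Zs"
  unfolding Zs_def by blast

lemma Zs_subring: "is_subring Zs"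
  unfolding is_subring_def
proof (intro conjI ballI)
  show "0 \<in> Zs" by (rule ZsI[of "{}"]) auto
  show "1 \<in> Zs" by (rule ZsI[of "{1}" _ "\<lambda>_. 1"]) (auto simp: one)
  fix a b assume "a \<in> Zs" "b \<in> Zs"
  then obtain S1 m1 S2 m2 where A: "finite S1" "S1 \<subseteq> P" "a = (\<Sum>p\<in>S1. of_int (m1 p) * p)"
    and B: "finite S2" "S2 \<subseteq> P" "b = (\<Sum>p\<in>S2. of_int (m2 p) * p)" unfolding Zs_def by blast
  define m where "m p = (if p \<in> S1 then m1 p else 0) + (if p \<in> S2 then m2 p else 0)" for p
  have fU: "finite (S1 \<union> S2)" using A B by simp
  have "(\<Sum>p\<in>S1 \<union> S2. of_int (m p) * p) = (\<Sum>p\<in>S1 \<union> S2. of_int (if p \<in> S1 then m1 p else 0) * p + of_int (if p \<in> S2 then m2 p else 0) * p)"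
    unfolding m_def by (intro sum.cong refl) (simp only: of_int_add distrib_right)
  also have "\<dots> = (\<Sum>p\<in>S1 \<union> S2. of_int (if p \<in> S1 then m1 p else 0) * p) + (\<Sum>p\<in>S1 \<union> S2. of_int (if p \<in> S2 then m2 p else 0) * p)"
    by (rule sum.distrib)
  also have "\<dots> = a + b" unfolding A(3) B(3) by (simp only: ext_sum[OF fU] Un_upper1 Un_upper2)
  finally show "a + b \<in> Zs" using fU A(2) B(2) by (intro ZsI[of "S1 \<union> S2" _ m]) auto
  have "a * b = (\<Sum>r\<in>(\<lambda>g. fst g * snd g) ` (S1 \<times> S2). of_int (\<Sum>g\<in>{g \<in> S1 \<times> S2. fst g * snd g = r}. m1 (fst g) * m2 (snd g)) * r)"
    unfolding A(3) B(3) by (rule prod_group[OF A(1) B(1)])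
  moreover have "(\<lambda>g. fst g * snd g) ` (S1 \<times> S2) \<subseteq> P" using A(2) B(2) mul by force
  moreover have "finite ((\<lambda>g. fst g * snd g) ` (S1 \<times> S2))" using A B by simp
  ultimately show "a * b \<in> Zs" by (intro ZsI) 
next
  fix a assume "a \<in> Zs"
  then obtain S1 m1 where A: "finite S1" "S1 \<subseteq> P" "a = (\<Sum>p\<in>S1. of_int (m1 p) * p)" unfolding Zs_def by blast
  have "- a = (\<Sum>p\<in>S1. of_int (- m1 p) * p)" unfolding A(3) by (simp add: sum_negf)
  thus "- a \<in> Zs" using A by (intro ZsI) 
qed

lemma Zspan_nz:
  assumes "u \<in> ZP P"
  shows "\<exists>S m. finite S \<and> S \<subseteq> P \<and> (\<forall>p\<in>S. m p \<noteq> 0) \<and> u = (\<Sum>p\<in>S. of_int (m p) * p)"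
proof -
  have "P \<subseteq> Zs"
  proof
    fix p assume "p \<in> P"
    thus "p \<in> Zs" by (intro ZsI[of "{p}" _ "\<lambda>_. 1"]) auto
  qed
  hence "ZP P \<subseteq> Zs" unfolding ZP_def using Zs_subring by (intro ring_gen_min)
  then obtain S m where S: "finite S" "S \<subseteq> P" "u = (\<Sum>p\<in>S. of_int (m p) * p)"
    using assms unfolding Zs_def by blast
  have "u = (\<Sum>p\<in>{p\<in>S. m p \<noteq> 0}. of_int (m p) * p)"
    unfolding S(3) using S(1) by (intro sum.mono_neutral_right) auto
  moreover have "finite {p\<in>S. m p \<noteq> 0}" "{p\<in>S. m p \<noteq> 0} \<subseteq> P" using S by auto
  ultimately show ?thesis by blast
qed

end

lemma gre_apply:
  assumes "group_ring_embedded P" "finite S" "S \<subseteq> P" "(\<Sum>p\<in>S. of_int (m p) * p) = 0" "p \<in> S"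
  shows "m p = 0"
  using assms unfolding group_ring_embedded_def by blast

context SF
begin

lemma lin_group:
  assumes gre: "group_ring_embedded P" and A: "finite A" "g ` A \<subseteq> P" and r0: "r0 \<in> P"
    and eq: "(\<Sum>a\<in>A. of_int (h a) * g a) = of_int c0 * r0"
    and r: "r \<in> g ` A" "r \<noteq> r0"
  shows "(\<Sum>a\<in>{a \<in> A. g a = r}. h a) = 0"
proof -
  define W where "W = g ` A"
  define K where "K r = (\<Sum>a\<in>{a \<in> A. g a = r}. h a)" for r
  have "(\<Sum>a\<in>A. of_int (h a) * g a) = (\<Sum>r\<in>W. \<Sum>a\<in>{a \<in> A. g a = r}. of_int (h a) * g a)"
    unfolding W_def using A by (intro sum.group[symmetric]) auto
  also have "\<dots> = (\<Sum>r\<in>W. of_int (K r) * r)"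
  proof (intro sum.cong refl)
    fix r
    have "(\<Sum>a\<in>{a \<in> A. g a = r}. of_int (h a) * g a) = (\<Sum>a\<in>{a \<in> A. g a = r}. of_int (h a) * r)"
      by (intro sum.cong refl) simp
    also have "\<dots> = of_int (K r) * r" unfolding K_def by (simp only: sum_distrib_right of_int_sum)
    finally show "(\<Sum>a\<in>{a \<in> A. g a = r}. of_int (h a) * g a) = of_int (K r) * r" .
  qed
  finally have e1: "(\<Sum>r\<in>W. of_int (K r) * r) = of_int c0 * r0" using eq by simp
  define m1 where "m1 r = (if r \<in> W then K r else 0)" for r
  define m2 where "m2 r = (if r \<in> {r0} then c0 else 0)" for r
  define m where "m r = m1 r - m2 r" for r
  have fW: "finite (W \<union> {r0})" unfolding W_def using A by simp
  have "(\<Sum>r\<in>W \<union> {r0}. of_int (m r) * r) = (\<Sum>r\<in>W \<union> {r0}. of_int (m1 r) * r - of_int (m2 r) * r)"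
    unfolding m_def by (intro sum.cong refl) (simp only: of_int_diff left_diff_distrib)
  also have "\<dots> = (\<Sum>r\<in>W \<union> {r0}. of_int (m1 r) * r) - (\<Sum>r\<in>W \<union> {r0}. of_int (m2 r) * r)"
    by (rule sum_subtractf)
  also have "\<dots> = (\<Sum>r\<in>W. of_int (K r) * r) - (\<Sum>r\<in>{r0}. of_int ((\<lambda>_. c0) r) * r)"
    unfolding m1_def m2_def by (simp only: ext_sum[OF fW] Un_upper1 Un_upper2)
  also have "\<dots> = 0" using e1 by simp
  finally have "(\<Sum>r\<in>W \<union> {r0}. of_int (m r) * r) = 0" .
  moreover have "W \<union> {r0} \<subseteq> P" unfolding W_def using A r0 by auto
  moreover have "r \<in> W \<union> {r0}" using r unfolding W_def by blast
  ultimately have "m r = 0" using gre_apply[OF gre fW] by blast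
  moreover have "m r = K r" using r unfolding m_def m1_def m2_def W_def by simp
  ultimately show ?thesis unfolding K_def by simp
qed

lemma char0_int:
  assumes gre: "group_ring_embedded P" and e: "of_int k = (1::'f)"
  shows "k = 1"
proof -
  have "(\<Sum>p\<in>{1}. of_int ((\<lambda>_. k - 1) p) * (p::'f)) = 0" using e by simp
  from gre_apply[OF gre _ _ this] one have "k - 1 = 0" by simp
  thus ?thesis by simp
qed

end

lemma ex_top:
  assumes tot: "\<forall>a\<in>P. \<forall>b\<in>P. a \<noteq> b \<longrightarrow> R a b \<or> R b a"
    and tr: "\<forall>a\<in>P. \<forall>b\<in>P. \<forall>c\<in>P. R a b \<longrightarrow> R b c \<longrightarrow> R a c"
    and S: "finite S" "S \<noteq> {}" "S \<subseteq> P"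
  shows "\<exists>a\<in>S. \<forall>x\<in>S. x \<noteq> a \<longrightarrow> R x a"
  using S
proof (induction S rule: finite_ne_induct)
  case (singleton x) thus ?case by simp
next
  case (insert x F)
  then obtain a where a: "a \<in> F" "\<forall>y\<in>F. y \<noteq> a \<longrightarrow> R y a" by auto
  have xa: "x \<noteq> a" using insert a by blast
  have xP: "x \<in> P" "a \<in> P" "F \<subseteq> P" using insert a by auto
  show ?case
  proof (cases "R a x")
    case True
    have "\<forall>y\<in>insert x F. y \<noteq> x \<longrightarrow> R y x"
    proof (intro ballI impI)
      fix y assume y: "y \<in> insert x F" "y \<noteq> x"
      hence yF: "y \<in> F" by simp
      show "R y x"
      proof (cases "y = a")
        case True thus ?thesis using \<open>R a x\<close> by simp
      next
        case False thus ?thesis using a yF tr xP True \<open>R a x\<close> by blast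
      qed
    qed
    thus ?thesis by blast
  next
    case False
    hence "R x a" using tot xP xa by blast
    thus ?thesis using a by blast
  qed
qed

lemma uniq_top:
  fixes R :: "'f::field \<Rightarrow> 'f \<Rightarrow> bool"
  assumes irr: "\<forall>a\<in>P. \<not> R a a"
    and tr: "\<forall>a\<in>P. \<forall>b\<in>P. \<forall>c\<in>P. R a b \<longrightarrow> R b c \<longrightarrow> R a c"
    and mono: "\<forall>a\<in>P. \<forall>b\<in>P. \<forall>c\<in>P. R a b \<longrightarrow> R (a * c) (b * c)"
    and mulP: "\<forall>a\<in>P. \<forall>b\<in>P. a * b \<in> P"
    and ST: "S \<subseteq> P" "T \<subseteq> P" "a \<in> S" "b \<in> T"
    and ta: "\<forall>x\<in>S. x \<noteq> a \<longrightarrow> R x a" and tb: "\<forall>y\<in>T. y \<noteq> b \<longrightarrow> R y b"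
    and pq: "p \<in> S" "q \<in> T" "p * q = a * b"
  shows "p = a \<and> q = b"
proof (rule ccontr)
  assume ne: "\<not> (p = a \<and> q = b)"
  have P: "p \<in> P" "q \<in> P" "a \<in> P" "b \<in> P" using ST pq by auto
  have abP: "a * b \<in> P" using mulP P by blast
  have "R (p * q) (a * b)"
  proof (cases "p = a")
    case True
    hence "q \<noteq> b" using ne by simp
    hence "R q b" using tb pq by blast
    hence "R (q * a) (b * a)" using mono P by blast
    thus ?thesis using True by (simp add: mult.commute)
  next
    case False
    hence "R p a" using ta pq by blast
    hence 1: "R (p * q) (a * q)" using mono P by blast
    show ?thesis
    proof (cases "q = b")
      case True thus ?thesis using 1 by simp
    next
      case False
      hence "R q b" using tb pq by blast
      hence "R (q * a) (b * a)" using mono P by blast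
      hence 2: "R (a * q) (a * b)" by (simp add: mult.commute)
      have "p * q \<in> P" "a * q \<in> P" using mulP P by auto
      from tr[rule_format, OF this abP 1 2] show ?thesis .
    qed
  qed
  moreover have "\<not> R (a * b) (a * b)" using irr abP by blast
  ultimately show False using pq(3) by simp
qed


context SF
begin

lemma trivial_units:
  assumes gre: "group_ring_embedded P" and u: "u \<in> ZP P" and v: "v \<in> ZP P" and uv: "u * v = 1"
  shows "u \<in> P \<union> uminus ` P"
proof -
  obtain C where C: "cone C" "\<forall>g\<in>P. g \<noteq> 1 \<longrightarrow> g \<in> C \<or> inverse g \<in> C" using exists_order by blast
  have CP: "C \<subseteq> P" and Cm: "\<forall>a\<in>C. \<forall>b\<in>C. a * b \<in> C" and C1: "1 \<notin> C" using C(1) unfolding cone_def by auto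
  define R where "R a b \<longleftrightarrow> b * inverse a \<in> C" for a b
  define R' where "R' a b \<longleftrightarrow> R b a" for a b
  have irr: "\<forall>a\<in>P. \<not> R a a" unfolding R_def using C1 nz by simp
  have tr: "\<forall>a\<in>P. \<forall>b\<in>P. \<forall>c\<in>P. R a b \<longrightarrow> R b c \<longrightarrow> R a c"
  proof (intro ballI impI)
    fix a b c assume P: "a \<in> P" "b \<in> P" "c \<in> P" and ab: "R a b" and bc: "R b c"
    have "(c * inverse b) * (b * inverse a) \<in> C" using ab bc Cm unfolding R_def by blast
    moreover have "(c * inverse b) * (b * inverse a) = c * inverse a" using nz[OF P(2)] by (simp add: field_simps)
    ultimately show "R a c" unfolding R_def by simp
  qed
  have mono: "\<forall>a\<in>P. \<forall>b\<in>P. \<forall>c\<in>P. R a b \<longrightarrow> R (a * c) (b * c)"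
  proof (intro ballI impI)
    fix a b c assume P: "a \<in> P" "b \<in> P" "c \<in> P" and ab: "R a b"
    have e: "(b * c) * inverse (a * c) = b * inverse a" using nz[OF P(3)] by (simp add: field_simps)
    from ab have "b * inverse a \<in> C" unfolding R_def .
    thus "R (a * c) (b * c)" unfolding R_def e .
  qed
  have tot: "\<forall>a\<in>P. \<forall>b\<in>P. a \<noteq> b \<longrightarrow> R a b \<or> R b a"
  proof (intro ballI impI)
    fix a b assume P: "a \<in> P" "b \<in> P" and ne: "a \<noteq> b"
    have "b * inverse a \<in> P" using P by (intro mul inv)
    moreover have "b * inverse a \<noteq> 1"
    proof
      assume "b * inverse a = 1"
      hence "b * inverse a * a = a" by simp
      thus False using ne nz[OF P(1)] by (simp add: mult.assoc)
    qed
    ultimately have "b * inverse a \<in> C \<or> inverse (b * inverse a) \<in> C" using C(2) by blast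
    moreover have "inverse (b * inverse a) = a * inverse b" by (simp add: inverse_mult_distrib mult.commute)
    ultimately show "R a b \<or> R b a" unfolding R_def by metis
  qed
  have irr': "\<forall>a\<in>P. \<not> R' a a" using irr unfolding R'_def by simp
  have tr': "\<forall>a\<in>P. \<forall>b\<in>P. \<forall>c\<in>P. R' a b \<longrightarrow> R' b c \<longrightarrow> R' a c" using tr unfolding R'_def by blast
  have mono': "\<forall>a\<in>P. \<forall>b\<in>P. \<forall>c\<in>P. R' a b \<longrightarrow> R' (a * c) (b * c)" using mono unfolding R'_def by blast
  have tot': "\<forall>a\<in>P. \<forall>b\<in>P. a \<noteq> b \<longrightarrow> R' a b \<or> R' b a" using tot unfolding R'_def by blast
  have mulP: "\<forall>a\<in>P. \<forall>b\<in>P. a * b \<in> P" using mul by blast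
  obtain S m where S: "finite S" "S \<subseteq> P" "\<forall>p\<in>S. m p \<noteq> 0" "u = (\<Sum>p\<in>S. of_int (m p) * p)"
    using Zspan_nz[OF u] by blast
  obtain T n where T: "finite T" "T \<subseteq> P" "\<forall>p\<in>T. n p \<noteq> 0" "v = (\<Sum>p\<in>T. of_int (n p) * p)"
    using Zspan_nz[OF v] by blast
  have Sne: "S \<noteq> {}" using uv S(4) by auto
  have Tne: "T \<noteq> {}" using uv T(4) by auto
  define f where "f g = fst g * snd g" for g :: "'f \<times> 'f"
  define h where "h g = m (fst g) * n (snd g)" for g :: "'f \<times> 'f"
  have prod: "(\<Sum>g\<in>S \<times> T. of_int (h g) * f g) = of_int 1 * 1"
  proof -
    have "(\<Sum>g\<in>S \<times> T. of_int (h g) * f g) = (\<Sum>g\<in>S \<times> T. of_int (m (fst g)) * fst g * (of_int (n (snd g)) * snd g))"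
      by (intro sum.cong refl) (simp add: h_def f_def mult_ac)
    also have "\<dots> = (\<Sum>p\<in>S. \<Sum>q\<in>T. of_int (m p) * p * (of_int (n q) * q))" by (rule sum_cart)
    also have "\<dots> = u * v" unfolding S(4) T(4) by (rule sum_product[symmetric])
    finally show ?thesis using uv by simp
  qed
  have fP: "f ` (S \<times> T) \<subseteq> P" unfolding f_def using S(2) T(2) mul by force
  have key: "a * b = 1" if Rt: "\<forall>a\<in>P. \<not> Rr a a" "\<forall>a\<in>P. \<forall>b\<in>P. \<forall>c\<in>P. Rr a b \<longrightarrow> Rr b c \<longrightarrow> Rr a c"
      "\<forall>a\<in>P. \<forall>b\<in>P. \<forall>c\<in>P. Rr a b \<longrightarrow> Rr (a * c) (b * c)"
    and ab: "a \<in> S" "b \<in> T" "\<forall>x\<in>S. x \<noteq> a \<longrightarrow> Rr x a" "\<forall>y\<in>T. y \<noteq> b \<longrightarrow> Rr y b" for Rr a b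
  proof (rule ccontr)
    assume ne: "a * b \<noteq> 1"
    have "{g \<in> S \<times> T. f g = a * b} = {(a, b)}"
      using uniq_top[OF Rt mulP S(2) T(2) ab] ab(1,2) unfolding f_def by auto
    moreover have "(\<Sum>g\<in>{g \<in> S \<times> T. f g = a * b}. h g) = 0"
    proof -
      have "a * b \<in> f ` (S \<times> T)" using ab(1,2) unfolding f_def by force
      from lin_group[OF gre _ fP one prod this ne] S(1) T(1) show ?thesis by simp
    qed
    ultimately have "m a * n b = 0" unfolding h_def by simp
    thus False using S(3) T(3) ab(1,2) by simp
  qed
  obtain a where a: "a \<in> S" "\<forall>x\<in>S. x \<noteq> a \<longrightarrow> R x a" using ex_top[OF tot tr S(1) Sne S(2)] by blast
  obtain b where b: "b \<in> T" "\<forall>x\<in>T. x \<noteq> b \<longrightarrow> R x b" using ex_top[OF tot tr T(1) Tne T(2)] by blast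
  obtain a' where a': "a' \<in> S" "\<forall>x\<in>S. x \<noteq> a' \<longrightarrow> R' x a'" using ex_top[OF tot' tr' S(1) Sne S(2)] by blast
  obtain b' where b': "b' \<in> T" "\<forall>x\<in>T. x \<noteq> b' \<longrightarrow> R' x b'" using ex_top[OF tot' tr' T(1) Tne T(2)] by blast
  have ab1: "a * b = 1" by (rule key[OF irr tr mono a(1) b(1) a(2) b(2)])
  have ab1': "a' * b' = 1" by (rule key[OF irr' tr' mono' a'(1) b'(1) a'(2) b'(2)])
  have aP: "a \<in> P" "b \<in> P" "a' \<in> P" "b' \<in> P" using a b a' b' S T by auto
  have aa: "a' = a"
  proof (rule ccontr)
    assume "a' \<noteq> a"
    hence "R a' a" using a a' by blast
    hence 1: "R (a' * b') (a * b')" using mono aP by blast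
    have "R (a' * b') (a * b)"
    proof (cases "b' = b")
      case True thus ?thesis using 1 by simp
    next
      case False
      hence "R b' b" using b b' by blast
      hence "R (b' * a) (b * a)" using mono aP by blast
      hence 2: "R (a * b') (a * b)" by (simp add: mult.commute)
      have "a' * b' \<in> P" "a * b' \<in> P" "a * b \<in> P" using mulP aP by auto
      from tr[rule_format, OF this 1 2] show ?thesis .
    qed
    thus False using ab1 ab1' irr one by simp
  qed
  have Sa: "S = {a}"
  proof -
    have "x = a" if "x \<in> S" for x
    proof (rule ccontr)
      assume "x \<noteq> a"
      hence "R x a" "R a x" using a a' aa that unfolding R'_def by auto
      moreover have "x \<in> P" using that S(2) by blast
      ultimately have "R x x" using tr aP by blast
      thus False using irr \<open>x \<in> P\<close> by blast
    qed
    thus ?thesis using a(1) by blast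
  qed
  have bb: "b' = b"
  proof (rule ccontr)
    assume "b' \<noteq> b"
    hence "R b' b" using b b' by blast
    hence "R (b' * a) (b * a)" using mono aP by blast
    hence "R (a' * b') (a * b)" using aa by (simp add: mult.commute)
    thus False using ab1 ab1' irr one by simp
  qed
  have Tb: "T = {b}"
  proof -
    have "x = b" if "x \<in> T" for x
    proof (rule ccontr)
      assume "x \<noteq> b"
      hence "R x b" "R b x" using b b' bb that unfolding R'_def by auto
      moreover have "x \<in> P" using that T(2) by blast
      ultimately have "R x x" using tr aP by blast
      thus False using irr \<open>x \<in> P\<close> by blast
    qed
    thus ?thesis using b(1) by blast
  qed
  have "of_int (m a * n b) * (a * b) = u * v" using S(4) T(4) Sa Tb by (simp add: mult_ac)
  hence "of_int (m a * n b) = (1::'f)" using uv ab1 by simp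
  hence "m a * n b = 1" by (rule char0_int[OF gre])
  hence "m a = 1 \<or> m a = -1" using zmult_eq_1_iff[of "m a" "n b"] by blast
  moreover have "u = of_int (m a) * a" using S(4) Sa by simp
  ultimately show ?thesis using aP by auto
qed

end


lemma laurent_cong: "x 1 = x' 1 \<Longrightarrow> x 2 = x' 2 \<Longrightarrow> laurent_ring P 2 x = laurent_ring P 2 x'"
  unfolding laurent_ring2 by simp

lemma laurent_subring: "is_subring (laurent_ring P 2 x)"
  unfolding laurent_ring_def by (rule ring_gen_subring)

lemma ZP_laurent: "ZP P \<subseteq> laurent_ring P 2 x"
  unfolding laurent_ring2 by (rule ZP_mono) blast

lemma laurent_gens: "x 1 \<in> laurent_ring P 2 x" "x 2 \<in> laurent_ring P 2 x"
  "inverse (x 1) \<in> laurent_ring P 2 x" "inverse (x 2) \<in> laurent_ring P 2 x"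
  unfolding laurent_ring2 by (rule rg_gen, blast)+

lemma pos0: "pos 0 = 0" unfolding pos_def by simp

context SF
begin

lemma one_plus_nz:
  assumes gre: "group_ring_embedded P" and y: "y \<in> P"
  shows "1 + y \<noteq> 0"
proof
  assume e: "1 + y = 0"
  show False
  proof (cases "y = 1")
    case True
    hence "(\<Sum>p\<in>{1}. of_int ((\<lambda>_. 2::int) p) * (p::'f)) = 0" using e by simp
    from gre_apply[OF gre _ _ this] one show False by simp
  next
    case False
    hence h: "(\<Sum>p\<in>{1, y}. of_int ((\<lambda>_. 1::int) p) * (p::'f)) = 0" using e by simp
    have "(\<lambda>_. 1::int) (1::'f) = 0" by (rule gre_apply[OF gre _ _ h]) (use one y in auto)
    thus False by simp
  qed
qed

definition pp :: "'f \<Rightarrow> 'f" where "pp y = (1 + y) / sp 1 y"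

lemma pp_ZP: "y \<in> P \<Longrightarrow> pp y \<in> ZP P"
  unfolding pp_def divide_inverse
  using P_ZP[of P] one pl[OF one] inv[OF pl[OF one]]
  by (intro sr_mult[OF ZP_subring] sr_add[OF ZP_subring]) auto

lemma pp_nz: "group_ring_embedded P \<Longrightarrow> y \<in> P \<Longrightarrow> pp y \<noteq> 0"
  unfolding pp_def using one_plus_nz nz[OF pl[OF one]] by simp

lemma pp_inv:
  assumes y: "y \<in> P"
  shows "pp (inverse y) = pp y"
proof -
  have y0: "y \<noteq> 0" using nz[OF y] .
  have "sp 1 (inverse y) = sp (y * inverse y) (1 * inverse y)" using y0 by simp
  also have "\<dots> = sp y 1 * inverse y" using distr[OF y one inv[OF y]] by simp
  also have "\<dots> = sp 1 y * inverse y" using comm[OF y one] by simp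
  finally have s: "sp 1 (inverse y) = sp 1 y * inverse y" .
  have s0: "sp 1 y \<noteq> 0" using nz[OF pl[OF one y]] .
  show ?thesis unfolding pp_def s using y0 s0 by (simp add: field_simps)
qed

lemma mut_step:
  assumes m: "is_mutation P sp 2 k x y Bm x' y' Bm'" and k: "k \<in> {1..2}"
    and Bz: "\<forall>i\<in>{1..2}. \<forall>j\<in>{1..2}. Bm i j = 0"
  shows "x' k = inverse (x k) * pp (y k)" "\<forall>i\<in>{1..2}. i \<noteq> k \<longrightarrow> x' i = x i"
    "y' k = inverse (y k)" "\<forall>i\<in>{1..2}. i \<noteq> k \<longrightarrow> y' i = y i"
    "\<forall>i\<in>{1..2}. \<forall>j\<in>{1..2}. Bm' i j = 0"
proof -
  have p1: "(\<Prod>j\<in>{1..2}. x j powi pos (- Bm j k)) = 1"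
    using Bz k by (intro prod.neutral) (simp add: pos0)
  have p2: "(\<Prod>j\<in>{1..2}. x j powi Bm j k) = 1"
    using Bz k by (intro prod.neutral) simp
  show "x' k = inverse (x k) * pp (y k)"
    using m p1 p2 unfolding is_mutation_def pp_def by (simp add: divide_inverse mult.assoc)
  show "\<forall>i\<in>{1..2}. i \<noteq> k \<longrightarrow> x' i = x i" using m unfolding is_mutation_def by blast
  show "y' k = inverse (y k)" using m unfolding is_mutation_def by blast
  show "\<forall>i\<in>{1..2}. i \<noteq> k \<longrightarrow> y' i = y i"
    using m Bz k unfolding is_mutation_def by (simp add: pos0)
  show "\<forall>i\<in>{1..2}. \<forall>j\<in>{1..2}. Bm' i j = 0"
    using m Bz k unfolding is_mutation_def by (simp add: pos0)
qed

end


lemma lab2_range: "lab2 m \<in> {1..2}" unfolding lab2_def by auto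

context SF
begin

definition Inv :: "(int \<Rightarrow> nat \<Rightarrow> 'f) \<Rightarrow> (int \<Rightarrow> nat \<Rightarrow> 'f) \<Rightarrow> (int \<Rightarrow> nat \<Rightarrow> nat \<Rightarrow> int) \<Rightarrow> int \<Rightarrow> int \<Rightarrow> bool" where
  "Inv X Y B t0 t \<longleftrightarrow> (\<forall>i\<in>{1..2}. \<forall>j\<in>{1..2}. B t i j = 0) \<and>
     (\<forall>i\<in>{1..2}. Y t i = Y t0 i \<or> Y t i = inverse (Y t0 i)) \<and>
     (\<forall>i\<in>{1..2}. X t i = X t0 i \<or> X t i = pp (Y t0 i) * inverse (X t0 i))"

lemma Inv_step:
  assumes gre: "group_ring_embedded P"
    and y0: "\<forall>i\<in>{1..2}. Y t0 i \<in> P" and x0: "\<forall>i\<in>{1..2}. X t0 i \<noteq> 0"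
    and I: "Inv X Y B t0 s" and m: "is_mutation P sp 2 k (X s) (Y s) (B s) (X s') (Y s') (B s')"
    and k: "k \<in> {1..2}"
  shows "Inv X Y B t0 s'" "X s' k = inverse (X s k) * pp (Y t0 k)" "\<forall>i\<in>{1..2}. i \<noteq> k \<longrightarrow> X s' i = X s i"
proof -
  have Bz: "\<forall>i\<in>{1..2}. \<forall>j\<in>{1..2}. B s i j = 0" using I unfolding Inv_def by blast
  note ms = mut_step[OF m k Bz]
  have ppk: "pp (Y s k) = pp (Y t0 k)"
  proof -
    have "Y s k = Y t0 k \<or> Y s k = inverse (Y t0 k)" using I k unfolding Inv_def by blast
    moreover have "Y t0 k \<in> P" using y0 k by blast
    ultimately show ?thesis using pp_inv by auto
  qed
  show xk: "X s' k = inverse (X s k) * pp (Y t0 k)" using ms(1) ppk by simp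
  show "\<forall>i\<in>{1..2}. i \<noteq> k \<longrightarrow> X s' i = X s i" using ms(2) .
  have "\<forall>i\<in>{1..2}. Y s' i = Y t0 i \<or> Y s' i = inverse (Y t0 i)"
  proof
    fix i :: nat assume i: "i \<in> {1..2}"
    show "Y s' i = Y t0 i \<or> Y s' i = inverse (Y t0 i)"
    proof (cases "i = k")
      case True thus ?thesis using ms(3) I i unfolding Inv_def by auto
    next
      case False thus ?thesis using ms(4) I i unfolding Inv_def by auto
    qed
  qed
  moreover have "\<forall>i\<in>{1..2}. X s' i = X t0 i \<or> X s' i = pp (Y t0 i) * inverse (X t0 i)"
  proof
    fix i :: nat assume i: "i \<in> {1..2}"
    show "X s' i = X t0 i \<or> X s' i = pp (Y t0 i) * inverse (X t0 i)"
    proof (cases "i = k")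
      case True
      have p0: "pp (Y t0 i) \<noteq> 0" using pp_nz[OF gre] y0 i by blast
      have xi: "X t0 i \<noteq> 0" using x0 i by blast
      have "X s i = X t0 i \<or> X s i = pp (Y t0 i) * inverse (X t0 i)" using I i unfolding Inv_def by blast
      thus ?thesis
      proof
        assume "X s i = X t0 i"
        thus ?thesis using xk True by (simp add: mult.commute)
      next
        assume "X s i = pp (Y t0 i) * inverse (X t0 i)"
        hence "X s' i = inverse (pp (Y t0 i) * inverse (X t0 i)) * pp (Y t0 i)" using xk True by simp
        also have "\<dots> = X t0 i" using p0 xi by (simp add: field_simps)
        finally show ?thesis by simp
      qed
    next
      case False thus ?thesis using ms(2) I i unfolding Inv_def by auto
    qed
  qed
  ultimately show "Inv X Y B t0 s'" using ms(5) unfolding Inv_def by blast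
qed

end

context SF
begin
lemma Inv_all:
  assumes gre: "group_ring_embedded P" and cp: "cluster_pattern2 P sp X Y B"
    and Bz: "\<forall>i\<in>{1..2}. \<forall>j\<in>{1..2}. B t0 i j = 0"
  shows "Inv X Y B t0 t"
proof -
  have seed: "is_seed P 2 (X t0) (Y t0) (B t0)" using cp unfolding cluster_pattern2_def by blast
  have y0: "\<forall>i\<in>{1..2}. Y t0 i \<in> P" using seed unfolding is_seed_def by blast
  have ai: "alg_indep P 2 (X t0)" using seed unfolding is_seed_def by blast
  have x0: "\<forall>i\<in>{1..2}. X t0 i \<noteq> 0"
  proof
    fix i :: nat assume "i \<in> {1..2}"
    hence "i = 1 \<or> i = 2" by auto
    thus "X t0 i \<noteq> 0" using alg_indep_nz[OF ai] by auto
  qed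
  have cpm: "\<forall>m. is_mutation P sp 2 (lab2 m) (X m) (Y m) (B m) (X (m+1)) (Y (m+1)) (B (m+1)) \<and>
          is_mutation P sp 2 (lab2 m) (X (m+1)) (Y (m+1)) (B (m+1)) (X m) (Y m) (B m)"
    using cp unfolding cluster_pattern2_def by (rule conjunct2)
  have mu: "is_mutation P sp 2 (lab2 m) (X m) (Y m) (B m) (X (m+1)) (Y (m+1)) (B (m+1))"
     "is_mutation P sp 2 (lab2 m) (X (m+1)) (Y (m+1)) (B (m+1)) (X m) (Y m) (B m)" for m
    using spec[OF cpm, of m] by auto
  have I0: "Inv X Y B t0 t0" using Bz unfolding Inv_def by blast
  have up: "Inv X Y B t0 (t0 + int n)" for n
  proof (induction n)
    case 0 thus ?case using I0 by simp
  next
    case (Suc n)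
    have "Inv X Y B t0 (t0 + int n + 1)" by (rule Inv_step(1)[where X=X and Y=Y and B=B, OF gre y0 x0 Suc mu(1) lab2_range])
    moreover have "t0 + int n + 1 = t0 + int (Suc n)" by simp
    ultimately show ?case by metis
  qed
  have down: "Inv X Y B t0 (t0 - int n)" for n
  proof (induction n)
    case 0 thus ?case using I0 by simp
  next
    case (Suc n)
    have I': "Inv X Y B t0 ((t0 - int n - 1) + 1)" using Suc by simp
    have "Inv X Y B t0 (t0 - int n - 1)" by (rule Inv_step(1)[where X=X and Y=Y and B=B, OF gre y0 x0 I' mu(2) lab2_range])
    moreover have "t0 - int n - 1 = t0 - int (Suc n)" by simp
    ultimately show ?case by metis
  qed
  show ?thesis
  proof (cases "t \<ge> t0")
    case True
    hence "t = t0 + int (nat (t - t0))" by simp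
    thus ?thesis using up by metis
  next
    case False
    hence "t = t0 - int (nat (t0 - t))" by simp
    thus ?thesis using down by metis
  qed
qed

end


definition Ef :: "bool \<Rightarrow> 'f::field \<Rightarrow> int \<Rightarrow> 'f" where
  "Ef s q n = (if s then q powi n else 1)"

definition phi :: "bool \<Rightarrow> int \<Rightarrow> int" where
  "phi s n = (if s then - n else n)"

definition psi :: "bool \<Rightarrow> bool \<Rightarrow> int \<times> int \<Rightarrow> int \<times> int" where
  "psi s1 s2 g = (phi s1 (fst g), phi s2 (snd g))"

definition zv :: "bool \<Rightarrow> 'f::field \<Rightarrow> 'f \<Rightarrow> 'f" where
  "zv s q y = (if s then q * inverse y else y)"

definition Wv :: "bool \<Rightarrow> bool \<Rightarrow> (nat \<Rightarrow> 'f::field) \<Rightarrow> (nat \<Rightarrow> 'f) \<Rightarrow> nat \<Rightarrow> 'f" where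
  "Wv s1 s2 p x i = (if i = 1 then zv s1 (p 1) (x 1) else zv s2 (p 2) (x 2))"

lemma Wv1: "Wv s1 s2 p x 1 = zv s1 (p 1) (x 1)" unfolding Wv_def by simp
lemma Wv2: "Wv s1 s2 p x 2 = zv s2 (p 2) (x 2)" unfolding Wv_def by simp

lemma phi_phi: "phi s (phi s n) = n" unfolding phi_def by simp
lemma psi_psi: "psi s1 s2 (psi s1 s2 g) = g" unfolding psi_def by (simp add: phi_phi)
lemma psi_Box: "g \<in> Box M \<Longrightarrow> psi s1 s2 g \<in> Box M" unfolding psi_def Box_def phi_def by auto

lemma zpow:
  fixes y :: "'f::field"
  shows "zv s q y powi n = Ef s q n * y powi (phi s n)"
  unfolding zv_def Ef_def phi_def
  by (simp add: power_int_mult_distrib power_int_inverse power_int_minus)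

lemma transform:
  fixes x p :: "nat \<Rightarrow> 'f::field"
  shows "LS (Wv s1 s2 p x) c (Box M) =
    LS x (\<lambda>h. c (psi s1 s2 h) * Ef s1 (p 1) (phi s1 (fst h)) * Ef s2 (p 2) (phi s2 (snd h))) (Box M)"
proof -
  have "LS (Wv s1 s2 p x) c (Box M) = (\<Sum>g\<in>Box M. (c g * Ef s1 (p 1) (fst g) * Ef s2 (p 2) (snd g)) *
      (x 1 powi phi s1 (fst g) * x 2 powi phi s2 (snd g)))"
    unfolding LS_def Wv1 Wv2 zpow by (intro sum.cong refl) (simp add: mult_ac)
  also have "\<dots> = (\<Sum>h\<in>Box M. (c (psi s1 s2 h) * Ef s1 (p 1) (fst (psi s1 s2 h)) * Ef s2 (p 2) (snd (psi s1 s2 h))) *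
      (x 1 powi phi s1 (fst (psi s1 s2 h)) * x 2 powi phi s2 (snd (psi s1 s2 h))))"
    by (rule sum.reindex_bij_witness[of _ "psi s1 s2" "psi s1 s2"]) (auto simp: psi_psi psi_Box)
  also have "\<dots> = LS x (\<lambda>h. c (psi s1 s2 h) * Ef s1 (p 1) (phi s1 (fst h)) * Ef s2 (p 2) (phi s2 (snd h))) (Box M)"
    unfolding LS_def by (intro sum.cong refl) (simp add: psi_def phi_phi)
  finally show ?thesis .
qed

lemma Epow:
  fixes q :: "'f::field"
  assumes q: "q \<in> ZP P" "q \<noteq> 0" and n: "\<bar>n\<bar> \<le> int M"
  shows "q ^ M * Ef s q n \<in> ZP P"
proof (cases s)
  case True
  have "q ^ M * Ef s q n = q powi n * q ^ M" using True unfolding Ef_def by (simp add: mult.commute)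
  also have "\<dots> = q ^ nat (n + int M)" using n by (intro powi_shift q(2)) simp
  finally show ?thesis using sr_power[OF ZP_subring q(1)] by simp
next
  case False thus ?thesis unfolding Ef_def using sr_power[OF ZP_subring q(1)] by simp
qed

lemma FOUR:
  fixes x p :: "nat \<Rightarrow> 'f::field"
  assumes ai: "alg_indep P 2 x" and pZ: "p 1 \<in> ZP P" "p 2 \<in> ZP P" and pnz: "p 1 \<noteq> 0" "p 2 \<noteq> 0"
    and fL: "\<And>s1 s2. f \<in> laurent_ring P 2 (Wv s1 s2 p x)"
  shows "f \<in> ring_gen (P \<union> {x 1, x 2, zv True (p 1) (x 1), zv True (p 2) (x 2)})"
proof -
  let ?G = "P \<union> {x 1, x 2, zv True (p 1) (x 1), zv True (p 2) (x 2)}"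
  have xnz: "x 1 \<noteq> 0" "x 2 \<noteq> 0" using alg_indep_nz[OF ai] by auto
  have Wnz: "Wv s1 s2 p x 1 \<noteq> 0" "Wv s1 s2 p x 2 \<noteq> 0" for s1 s2
    unfolding Wv1 Wv2 zv_def using xnz pnz by auto
  have "\<forall>s. \<exists>N0. \<forall>M\<ge>N0. \<exists>c. (\<forall>g. c g \<in> ZP P) \<and> f = LS (Wv (fst s) (snd s) p x) c (Box M)"
    using laurent_rep[OF Wnz fL] by blast
  from choice[OF this] obtain Nf where Nf: "\<And>s M. M \<ge> Nf s \<Longrightarrow> \<exists>c. (\<forall>g. c g \<in> ZP P) \<and> f = LS (Wv (fst s) (snd s) p x) c (Box M)"
    by blast
  define M where "M = Nf (False, False) + Nf (False, True) + Nf (True, False) + Nf (True, True)"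
  have MN: "M \<ge> Nf s" for s unfolding M_def by (cases s) (case_tac a; case_tac b; simp)
  have "\<forall>s. \<exists>c. (\<forall>g. c g \<in> ZP P) \<and> f = LS (Wv (fst s) (snd s) p x) c (Box M)"
    using Nf MN by blast
  from choice[OF this] obtain cf where cf: "\<And>s g. cf s g \<in> ZP P" "\<And>s. f = LS (Wv (fst s) (snd s) p x) (cf s) (Box M)"
    by blast
  define a where "a s h = cf s (psi (fst s) (snd s) h) * Ef (fst s) (p 1) (phi (fst s) (fst h)) * Ef (snd s) (p 2) (phi (snd s) (snd h))" for s h
  have fa: "f = LS x (a s) (Box M)" for s
    using cf(2)[of s] transform[of "fst s" "snd s" p x "cf s" M] unfolding a_def by simp
  define w where "w = (p 1 * p 2) ^ M"
  have w0: "w \<noteq> 0" unfolding w_def using pnz by simp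
  have wa: "w * a s h \<in> ZP P" if h: "h \<in> Box M" for s h
  proof -
    have b: "\<bar>phi b n\<bar> \<le> int M" if "\<bar>n\<bar> \<le> int M" for b n using that unfolding phi_def by auto
    have h1: "\<bar>fst h\<bar> \<le> int M" "\<bar>snd h\<bar> \<le> int M" using h unfolding Box_def by auto
    have "w * a s h = cf s (psi (fst s) (snd s) h) * (p 1 ^ M * Ef (fst s) (p 1) (phi (fst s) (fst h))) * (p 2 ^ M * Ef (snd s) (p 2) (phi (snd s) (snd h)))"
      unfolding w_def a_def by (simp add: power_mult_distrib mult_ac)
    also have "\<dots> \<in> ZP P"
      by (rule sr_mult[OF ZP_subring, OF sr_mult[OF ZP_subring, OF cf(1) Epow[OF pZ(1) pnz(1) b[OF h1(1)]]] Epow[OF pZ(2) pnz(2) b[OF h1(2)]]])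
    finally show ?thesis .
  qed
  have aeq: "a s h = a (False, False) h" if h: "h \<in> Box M" for s h
  proof -
    have "LS x (\<lambda>h. a s h - a (False, False) h) (Box M) = 0"
      using fa[of s] fa[of "(False, False)"] unfolding LS_def by (simp add: left_diff_distrib sum_subtractf)
    moreover have "\<forall>g\<in>Box M. w * (a s g - a (False, False) g) \<in> ZP P"
    proof
      fix g assume g: "g \<in> Box M"
      show "w * (a s g - a (False, False) g) \<in> ZP P"
        unfolding right_diff_distrib by (rule sr_diff[OF ZP_subring wa[OF g] wa[OF g]])
    qed
    ultimately have "\<forall>g\<in>Box M. a s g - a (False, False) g = 0"
      using UL[OF ai finite_Box w0, where c="\<lambda>g. a s g - a (False, False) g"] unfolding LS_def by blast
    thus ?thesis using h by simp
  qed
  have zG: "zv b (p i) (x i) \<in> ring_gen ?G" if "i = 1 \<or> i = 2" for b i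
    using that unfolding zv_def by (cases b) (auto intro!: rg_gen)
  have ZG: "ZP P \<subseteq> ring_gen ?G" by (rule ZP_mono) blast
  have termG: "a (False, False) h * (x 1 powi fst h * x 2 powi snd h) \<in> ring_gen ?G" if h: "h \<in> Box M" for h
  proof -
    define s where "s = (fst h < 0, snd h < 0)"
    have nn: "phi (fst s) (fst h) \<ge> 0" "phi (snd s) (snd h) \<ge> 0" unfolding s_def phi_def by auto
    have "a (False, False) h * (x 1 powi fst h * x 2 powi snd h) = a s h * (x 1 powi fst h * x 2 powi snd h)"
      using aeq[OF h, of s] by simp
    also have "\<dots> = cf s (psi (fst s) (snd s) h) * (zv (fst s) (p 1) (x 1) powi (phi (fst s) (fst h)) * zv (snd s) (p 2) (x 2) powi (phi (snd s) (snd h)))"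
      unfolding a_def zpow phi_phi by (simp add: mult_ac)
    also have "\<dots> = cf s (psi (fst s) (snd s) h) * (zv (fst s) (p 1) (x 1) ^ nat (phi (fst s) (fst h)) * zv (snd s) (p 2) (x 2) ^ nat (phi (snd s) (snd h)))"
      using nn by (simp add: power_int_def)
    also have "\<dots> \<in> ring_gen ?G"
      using subsetD[OF ZG cf(1)] zG by (intro rg_mult rg_power) auto
    finally show ?thesis .
  qed
  have "f = LS x (a (False, False)) (Box M)" by (rule fa)
  also have "\<dots> \<in> ring_gen ?G" unfolding LS_def by (intro rg_sum termG)
  finally show ?thesis .
qed


lemma PV_sub:
  assumes "is_subring R'" "R \<subseteq> R'" "v \<in> R'"
  shows "PV R v \<subseteq> R'"
proof
  fix a assume "a \<in> PV R v"
  then obtain F where F: "a = poly F v" "\<forall>i. coeff F i \<in> R" unfolding PV_def by blast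
  have "poly F v = (\<Sum>i\<le>degree F. coeff F i * v ^ i)" by (rule poly_altdef)
  also have "\<dots> \<in> R'" using assms F(2) by (intro sr_sum sr_mult sr_power) auto
  finally show "a \<in> R'" using F(1) by simp
qed

lemma prod12: "(\<Prod>j\<in>{1..2::nat}. f j) = f 1 * f 2"
proof -
  have "{1..2::nat} = {1,2}" by auto
  thus ?thesis by simp
qed

definition TT :: "'f::field \<Rightarrow> 'f \<Rightarrow> nat \<Rightarrow> nat \<Rightarrow> 'f poly" where
  "TT u y a b = smult u (monom y a + monom 1 b)"

lemma TT_coeff: "coeff (TT u y a b) i = u * ((if a = i then y else 0) + (if b = i then 1 else 0))"
  unfolding TT_def by (simp add: coeff_monom)

context SF
begin

lemma TT_ZP: "u \<in> P \<Longrightarrow> y \<in> P \<Longrightarrow> coeff (TT u y a b) i \<in> ZP P"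
  unfolding TT_coeff using P_ZP[of P] one
  by (intro sr_mult[OF ZP_subring] sr_add[OF ZP_subring]) (auto simp: sr_0[OF ZP_subring])

lemma TT_c0:
  assumes "u \<in> P" "y \<in> P" "(a = 0) \<noteq> (b = 0)"
  shows "coeff (TT u y a b) 0 \<in> P"
  using assms unfolding TT_coeff by (auto intro: mul)

lemma exch1:
  assumes "Bm 1 1 = 0"
  shows "exch_poly sp 2 1 x y Bm = poly (TT (1 / sp 1 (y 1)) (y 1) (nat (pos (Bm 2 1))) (nat (pos (- Bm 2 1)))) (x 2)"
  using assms unfolding exch_poly_def prod12 TT_def by (simp add: pos0 poly_monom algebra_simps)

lemma exch2:
  assumes "Bm 2 2 = 0"
  shows "exch_poly sp 2 2 x y Bm = poly (TT (1 / sp 1 (y 2)) (y 2) (nat (pos (Bm 1 2))) (nat (pos (- Bm 1 2)))) (x 1)"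
  using assms unfolding exch_poly_def prod12 TT_def by (simp add: pos0 poly_monom algebra_simps)

lemma ab_cases: "b \<noteq> 0 \<Longrightarrow> (nat (pos b) = 0) \<noteq> (nat (pos (- b)) = 0)"
  unfolding pos_def by auto

lemma COPRIME:
  assumes gre: "group_ring_embedded P" and seed: "is_seed P 2 x y Bm"
    and B11: "Bm 1 1 = 0" and B22: "Bm 2 2 = 0" and B21: "Bm 2 1 \<noteq> 0" and B12: "Bm 1 2 \<noteq> 0"
  shows "coprime_seed P sp 2 x y Bm"
proof -
  have ai: "alg_indep P 2 x" using seed unfolding is_seed_def by blast
  have yP: "y 1 \<in> P" "y 2 \<in> P" using seed unfolding is_seed_def by auto
  define u1 where "u1 = 1 / sp 1 (y 1)"
  define u2 where "u2 = 1 / sp 1 (y 2)"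
  have uP: "u1 \<in> P" "u2 \<in> P" unfolding u1_def u2_def using yP by (auto intro: dvd one pl)
  define T1 where "T1 = TT u1 (y 1) (nat (pos (Bm 2 1))) (nat (pos (- Bm 2 1)))"
  define T2 where "T2 = TT u2 (y 2) (nat (pos (Bm 1 2))) (nat (pos (- Bm 1 2)))"
  define P1 where "P1 = exch_poly sp 2 1 x y Bm"
  define P2 where "P2 = exch_poly sp 2 2 x y Bm"
  have P1e: "P1 = poly T1 (x 2)" unfolding P1_def T1_def u1_def using exch1[where Bm=Bm, OF B11] .
  have P2e: "P2 = poly T2 (x 1)" unfolding P2_def T2_def u2_def using exch2[where Bm=Bm, OF B22] .
  have T1Z: "\<forall>i. coeff T1 i \<in> ZP P" unfolding T1_def using TT_ZP uP yP by blast
  have T2Z: "\<forall>i. coeff T2 i \<in> ZP P" unfolding T2_def using TT_ZP uP yP by blast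
  have c1P: "coeff T1 0 \<in> P" unfolding T1_def using TT_c0 uP yP ab_cases[OF B21] by blast
  have c2P: "coeff T2 0 \<in> P" unfolding T2_def using TT_c0 uP yP ab_cases[OF B12] by blast
  have T1nz: "T1 \<noteq> 0" using nz[OF c1P] by auto
  have T2nz: "T2 \<noteq> 0" using nz[OF c2P] by auto
  have P1nz: "P1 \<noteq> 0" using transc_ZP2[OF ai] T1Z T1nz unfolding P1e transc_over_def by blast
  have P2nz: "P2 \<noteq> 0" using transc_ZP1[OF ai] T2Z T2nz unfolding P2e transc_over_def by blast
  let ?R1 = "ring_gen (P \<union> {x 1})" and ?R2 = "ring_gen (P \<union> {x 2})"
  have P1R: "P1 \<in> ?R2" unfolding P1e PV_def
    using PV_sub[OF ring_gen_subring ZP_mono[of P "P \<union> {x 2}"] rg_gen[of "x 2"]] T1Z unfolding PV_def by blast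
  have P2R: "P2 \<in> ?R1" unfolding P2e
    using PV_sub[OF ring_gen_subring ZP_mono[of P "P \<union> {x 1}"] rg_gen[of "x 1"]] T2Z unfolding PV_def by blast
  show ?thesis unfolding coprime_seed_def
  proof (intro ballI impI)
    fix k l d assume kl: "k \<in> {1..2}" "l \<in> {1..2}" "k \<noteq> l" and d: "d \<in> poly_ring P 2 x"
      and q1: "\<exists>q\<in>poly_ring P 2 x. exch_poly sp 2 k x y Bm = d * q"
      and q2: "\<exists>q\<in>poly_ring P 2 x. exch_poly sp 2 l x y Bm = d * q"
    have "(k = 1 \<and> l = 2) \<or> (k = 2 \<and> l = 1)" using kl by auto
    then obtain qa qb where qa: "qa \<in> poly_ring P 2 x" "P1 = d * qa" and qb: "qb \<in> poly_ring P 2 x" "P2 = d * qb"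
      using q1 q2 unfolding P1_def P2_def by auto
    have dqa: "d \<in> ?R2 \<and> qa \<in> ?R2"
      using DEG[OF ring_gen_subring transc1[OF ai] subsetD[OF poly_ring_PV1 d] subsetD[OF poly_ring_PV1 qa(1)] qa(2)[symmetric] P1R P1nz] .
    have dR1: "d \<in> ?R1"
      using DEG[OF ring_gen_subring transc2[OF ai] subsetD[OF poly_ring_PV2 d] subsetD[OF poly_ring_PV2 qb(1)] qb(2)[symmetric] P2R P2nz] by blast
    have dZ: "d \<in> ZP P"
      using BOTH[OF ring_gen_subring transc1[OF ai] ZP_mono[of P "P \<union> {x 2}"] subsetD[OF ZPv_PV dR1]] dqa by blast
    obtain Q where Q: "qa = poly Q (x 2)" "\<forall>i. coeff Q i \<in> ZP P"
      using subsetD[OF ZPv_PV, of qa P "x 2"] dqa unfolding PV_def by blast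
    have "poly (smult d Q - T1) (x 2) = 0" using qa(2) P1e Q(1) by simp
    moreover have "\<forall>i. coeff (smult d Q - T1) i \<in> ZP P"
      using Q(2) T1Z dZ by (auto intro: sr_diff[OF ZP_subring] sr_mult[OF ZP_subring])
    ultimately have "smult d Q - T1 = 0" using transc_ZP2[OF ai] unfolding transc_over_def by blast
    hence "coeff (smult d Q) 0 = coeff T1 0" by simp
    hence e: "d * coeff Q 0 = coeff T1 0" by simp
    have "d * (coeff Q 0 * inverse (coeff T1 0)) = 1"
      using e nz[OF c1P] by (simp add: mult.assoc[symmetric])
    moreover have "coeff Q 0 * inverse (coeff T1 0) \<in> ZP P"
      using Q(2) inv[OF c1P] P_ZP by (blast intro: sr_mult[OF ZP_subring])
    ultimately show "d \<in> P \<union> uminus ` P" using trivial_units[OF gre dZ] by blast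
  qed
qed

end


lemma lab2_pm: "lab2 (t + 1) = lab2 (t - 1)" "lab2 (t - 1) \<noteq> lab2 t"
  unfolding lab2_def by auto

context SF
begin

lemma exch_B0:
  assumes Bz: "\<forall>i\<in>{1..2}. \<forall>j\<in>{1..2}. Bm i j = 0" and i: "i \<in> {1..2}"
  shows "exch_poly sp 2 i x y Bm = pp (y i)"
proof -
  have "Bm 1 i = 0" "Bm 2 i = 0" using Bz i by auto
  thus ?thesis unfolding exch_poly_def prod12 pp_def by (simp add: pos0 add.commute)
qed

lemma vals:
  assumes gre: "group_ring_embedded P" and cp: "cluster_pattern2 P sp X Y B"
    and Bz: "\<forall>i\<in>{1..2}. \<forall>j\<in>{1..2}. B t0 i j = 0" and i: "i \<in> {1..2}"
  shows "X (t0 + 1) i = zv (i = lab2 t0) (pp (Y t0 i)) (X t0 i)"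
    "X (t0 - 1) i = zv (i = lab2 (t0 - 1)) (pp (Y t0 i)) (X t0 i)"
    "X (t0 + 2) i = zv True (pp (Y t0 i)) (X t0 i)"
proof -
  have seed: "is_seed P 2 (X t0) (Y t0) (B t0)" using cp unfolding cluster_pattern2_def by blast
  have y0: "\<forall>i\<in>{1..2}. Y t0 i \<in> P" using seed unfolding is_seed_def by blast
  have ai: "alg_indep P 2 (X t0)" using seed unfolding is_seed_def by blast
  have x0: "\<forall>i\<in>{1..2}. X t0 i \<noteq> 0"
  proof
    fix i :: nat assume "i \<in> {1..2}"
    hence "i = 1 \<or> i = 2" by auto
    thus "X t0 i \<noteq> 0" using alg_indep_nz[OF ai] by auto
  qed
  have cpm: "\<forall>m. is_mutation P sp 2 (lab2 m) (X m) (Y m) (B m) (X (m+1)) (Y (m+1)) (B (m+1)) \<and>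
          is_mutation P sp 2 (lab2 m) (X (m+1)) (Y (m+1)) (B (m+1)) (X m) (Y m) (B m)"
    using cp unfolding cluster_pattern2_def by (rule conjunct2)
  have mu: "is_mutation P sp 2 (lab2 m) (X m) (Y m) (B m) (X (m+1)) (Y (m+1)) (B (m+1))"
     "is_mutation P sp 2 (lab2 m) (X (m+1)) (Y (m+1)) (B (m+1)) (X m) (Y m) (B m)" for m
    using spec[OF cpm, of m] by auto
  have I: "Inv X Y B t0 t" for t by (rule Inv_all[OF gre cp Bz])
  note st1 = Inv_step[where X=X and Y=Y and B=B, OF gre y0 x0 I[of t0] mu(1)[of t0] lab2_range]
  have e1: "t0 - 1 + 1 = t0" by simp
  note st2 = Inv_step[where X=X and Y=Y and B=B, OF gre y0 x0 I[of t0] mu(2)[of "t0 - 1", unfolded e1] lab2_range]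
  have e2: "t0 + 1 + 1 = t0 + 2" by simp
  note st3 = Inv_step[where X=X and Y=Y and B=B, OF gre y0 x0 I[of "t0 + 1"] mu(1)[of "t0 + 1", unfolded e2] lab2_range]
  show v1: "X (t0 + 1) i = zv (i = lab2 t0) (pp (Y t0 i)) (X t0 i)"
  proof (cases "i = lab2 t0")
    case True thus ?thesis using st1(2) unfolding zv_def by (simp add: mult.commute)
  next
    case False thus ?thesis using st1(3) i unfolding zv_def by simp
  qed
  show "X (t0 - 1) i = zv (i = lab2 (t0 - 1)) (pp (Y t0 i)) (X t0 i)"
  proof (cases "i = lab2 (t0 - 1)")
    case True thus ?thesis using st2(2) unfolding zv_def by (simp add: mult.commute)
  next
    case False thus ?thesis using st2(3) i unfolding zv_def by simp
  qed
  show "X (t0 + 2) i = zv True (pp (Y t0 i)) (X t0 i)"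
  proof (cases "i = lab2 (t0 + 1)")
    case True
    hence "i \<noteq> lab2 t0" using lab2_pm[of t0] by simp
    hence "X (t0 + 1) i = X t0 i" using v1 unfolding zv_def by simp
    thus ?thesis using st3(2) True unfolding zv_def by (simp add: mult.commute)
  next
    case False
    hence "i = lab2 t0" using i lab2_range[of t0] lab2_range[of "t0 + 1"] lab2_pm[of t0] by auto
    thus ?thesis using st3(3) i False v1 by simp
  qed
qed

end


lemma two_cases: "i \<in> {1..2::nat} \<Longrightarrow> i = 1 \<or> i = 2" by auto

context SF
begin

lemma in_L12:
  assumes "i \<in> {1..2::nat}"
  shows "x i \<in> laurent_ring P 2 x" "inverse (x i) \<in> laurent_ring P 2 x"
  using two_cases[OF assms] laurent_gens[of x P] by auto

lemma MAIN0:
  assumes gre: "group_ring_embedded P" and cp: "cluster_pattern2 P sp X Y B"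
    and Bz: "\<forall>i\<in>{1..2}. \<forall>j\<in>{1..2}. B t0 i j = 0"
    and ncop: "\<not> coprime_seed P sp 2 (X t0) (Y t0) (B t0)"
  shows "lower_bound2 P X t0 = cluster_alg2 P X
       \<and> cluster_alg2 P X = upper_cluster_alg2 P X
       \<and> upper_cluster_alg2 P X \<subset> upper_bound2 P X t0"
proof -
  have seed: "is_seed P 2 (X t) (Y t) (B t)" for t using cp unfolding cluster_pattern2_def by blast
  have ai: "alg_indep P 2 (X t)" for t using seed unfolding is_seed_def by blast
  have y0: "Y t0 i \<in> P" if "i \<in> {1..2}" for i using seed[of t0] that unfolding is_seed_def by blast
  define x where "x = X t0"
  define p where "p i = pp (Y t0 i)" for i
  have xnz: "x 1 \<noteq> 0" "x 2 \<noteq> 0" unfolding x_def using alg_indep_nz[OF ai] by auto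
  have pZ: "p 1 \<in> ZP P" "p 2 \<in> ZP P" unfolding p_def using pp_ZP y0 by auto
  have pnz: "p 1 \<noteq> 0" "p 2 \<noteq> 0" unfolding p_def using pp_nz[OF gre] y0 by auto
  define xs where "xs i = zv True (p i) (x i)" for i
  define k where "k = lab2 t0"
  define k' where "k' = lab2 (t0 - 1)"
  have kk: "(k = 1 \<and> k' = 2) \<or> (k = 2 \<and> k' = 1)" unfolding k_def k'_def lab2_def by auto
  have v1: "X (t0 + 1) i = zv (i = k) (p i) (x i)" if "i \<in> {1..2}" for i
    using vals(1)[OF gre cp Bz that] unfolding k_def p_def x_def .
  have vm: "X (t0 - 1) i = zv (i = k') (p i) (x i)" if "i \<in> {1..2}" for i
    using vals(2)[OF gre cp Bz that] unfolding k'_def p_def x_def .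
  have v2: "X (t0 + 2) i = zv True (p i) (x i)" if "i \<in> {1..2}" for i
    using vals(3)[OF gre cp Bz that] unfolding p_def x_def .
  have one2: "(1::nat) \<in> {1..2}" "(2::nat) \<in> {1..2}" by auto
  have Ls: "laurent_ring P 2 (X t) = laurent_ring P 2 (Wv s1 s2 p x)"
    if "X t 1 = zv s1 (p 1) (x 1)" "X t 2 = zv s2 (p 2) (x 2)" for t s1 s2
    using that unfolding Wv_def by (intro laurent_cong) simp_all
  have L0: "laurent_ring P 2 (X t0) = laurent_ring P 2 (Wv False False p x)"
    by (rule Ls) (simp_all add: zv_def x_def)
  have L1: "laurent_ring P 2 (X (t0 + 1)) = laurent_ring P 2 (Wv (1 = k) (2 = k) p x)"
    by (rule Ls) (simp_all add: v1 one2)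
  have Lm: "laurent_ring P 2 (X (t0 - 1)) = laurent_ring P 2 (Wv (1 = k') (2 = k') p x)"
    by (rule Ls) (simp_all add: vm one2)
  have L2: "laurent_ring P 2 (X (t0 + 2)) = laurent_ring P 2 (Wv True True p x)"
    by (rule Ls) (simp_all add: v2 one2)
  have inv: "X t i = x i \<or> X t i = xs i" if "i \<in> {1..2}" for t i
    using Inv_all[OF gre cp Bz, of t] that unfolding Inv_def xs_def zv_def x_def p_def by auto
  define G4 where "G4 = P \<union> {x 1, x 2, xs 1, xs 2}"
  have xs_eq: "zv True (p i) (x i) = xs i" for i unfolding xs_def ..
  have gL: "P \<union> X t0 ` {1..2} \<union> X (t0 - 1) ` {1..2} \<union> X (t0 + 1) ` {1..2} = G4"
    unfolding two_img G4_def using v1[OF one2(1)] v1[OF one2(2)] vm[OF one2(1)] vm[OF one2(2)] kk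
    by (auto simp: zv_def xs_def x_def)
  have gA: "P \<union> {X t i |t i. i \<in> {1..2}} = G4"
  proof
    show "P \<union> {X t i |t i. i \<in> {1..2}} \<subseteq> G4"
    proof
      fix z assume "z \<in> P \<union> {X t i |t i. i \<in> {1..2}}"
      then consider "z \<in> P" | t i where "z = X t i" "i \<in> {1..2}" by blast
      thus "z \<in> G4"
      proof cases
        case 1 thus ?thesis unfolding G4_def by blast
      next
        case 2
        hence "i = 1 \<or> i = 2" by auto
        thus ?thesis using inv[OF 2(2), of t] 2(1) unfolding G4_def by auto
      qed
    qed
    show "G4 \<subseteq> P \<union> {X t i |t i. i \<in> {1..2}}"
    proof -
      have "x 1 = X t0 1" "x 2 = X t0 2" unfolding x_def by auto
      moreover have "xs k = X (t0 + 1) k" "xs k' = X (t0 - 1) k'"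
        using v1[of k] vm[of k'] kk unfolding xs_def by auto
      moreover have mem: "X t i \<in> {X t i |t i. i \<in> {1..2}}" if "i \<in> {1..2}" for t i using that by blast
      moreover have "k \<in> {1..2}" "k' \<in> {1..2}" using kk by auto
      ultimately have "{x 1, x 2, xs k, xs k'} \<subseteq> {X t i |t i. i \<in> {1..2}}" using one2 by (simp only: insert_subset) (metis empty_subsetI)
      moreover have "{x 1, x 2, xs k, xs k'} = {x 1, x 2, xs 1, xs 2}" using kk by auto
      ultimately show ?thesis unfolding G4_def by blast
    qed
  qed
  have lowA: "lower_bound2 P X t0 = ring_gen G4" unfolding lower_bound2_def gL ..
  have clA: "cluster_alg2 P X = ring_gen G4" unfolding cluster_alg2_def gA ..
  have AinL: "ring_gen G4 \<subseteq> laurent_ring P 2 (X t)" for t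
  proof (rule ring_gen_min[OF laurent_subring])
    let ?L = "laurent_ring P 2 (X t)"
    have PL: "P \<subseteq> ?L" using ZP_laurent P_ZP by blast
    have pL: "p i \<in> ?L" if "i \<in> {1..2}" for i using two_cases[OF that] pZ ZP_laurent by auto
    have xx: "x i \<in> ?L \<and> xs i \<in> ?L" if i: "i \<in> {1..2}" for i
    proof -
      have pi: "p i \<noteq> 0" "x i \<noteq> 0" using two_cases[OF i] pnz xnz by auto
      show ?thesis
      proof (cases "X t i = x i")
        case True
        have "xs i = p i * inverse (X t i)" unfolding xs_def zv_def True by simp
        thus ?thesis using True in_L12[OF i, of "X t"] pL[OF i] by (auto intro: sr_mult[OF laurent_subring])
      next
        case False
        hence Xi: "X t i = xs i" using inv[OF i] by blast
        have "x i = p i * inverse (X t i)" unfolding Xi xs_def zv_def using pi by (simp add: field_simps)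
        thus ?thesis using Xi in_L12[OF i, of "X t"] pL[OF i] by (auto intro: sr_mult[OF laurent_subring])
      qed
    qed
    show "G4 \<subseteq> ?L" unfolding G4_def using PL xx[OF one2(1)] xx[OF one2(2)] by blast
  qed
  have upA: "upper_cluster_alg2 P X = ring_gen G4"
  proof
    show "ring_gen G4 \<subseteq> upper_cluster_alg2 P X" unfolding upper_cluster_alg2_def using AinL by blast
    show "upper_cluster_alg2 P X \<subseteq> ring_gen G4"
    proof
      fix f assume f: "f \<in> upper_cluster_alg2 P X"
      hence fX: "f \<in> laurent_ring P 2 (X t)" for t unfolding upper_cluster_alg2_def by blast
      have "f \<in> laurent_ring P 2 (Wv s1 s2 p x)" for s1 s2
      proof (cases s1; cases s2)
        assume "s1" "s2" thus ?thesis using fX[of "t0 + 2"] L2 by simp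
      next
        assume "\<not> s1" "\<not> s2" thus ?thesis using fX[of t0] L0 by simp
      next
        assume "s1" "\<not> s2"
        thus ?thesis using fX[of "t0 + 1"] fX[of "t0 - 1"] L1 Lm kk by auto
      next
        assume "\<not> s1" "s2"
        thus ?thesis using fX[of "t0 + 1"] fX[of "t0 - 1"] L1 Lm kk by auto
      qed
      from FOUR[OF ai[of t0, folded x_def] pZ pnz this] show "f \<in> ring_gen G4"
        unfolding G4_def xs_def .
    qed
  qed
  have ex: "exch_poly sp 2 i (X t0) (Y t0) (B t0) = p i" if "i \<in> {1..2}" for i
    unfolding p_def by (rule exch_B0[OF Bz that])
  obtain kx lx d where kl: "kx \<in> {1..2}" "lx \<in> {1..2}" "kx \<noteq> lx" and d: "d \<in> poly_ring P 2 x"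
    and q1: "\<exists>q\<in>poly_ring P 2 x. exch_poly sp 2 kx (X t0) (Y t0) (B t0) = d * q"
    and q2: "\<exists>q\<in>poly_ring P 2 x. exch_poly sp 2 lx (X t0) (Y t0) (B t0) = d * q"
    and dn: "d \<notin> P \<union> uminus ` P"
    using ncop unfolding coprime_seed_def x_def by blast
  have "(kx = 1 \<and> lx = 2) \<or> (kx = 2 \<and> lx = 1)" using kl by auto
  then obtain qa qb where qa: "qa \<in> poly_ring P 2 x" "p 1 = d * qa" and qb: "qb \<in> poly_ring P 2 x" "p 2 = d * qb"
    using q1 q2 ex[OF one2(1)] ex[OF one2(2)] by auto
  have aix: "alg_indep P 2 x" unfolding x_def by (rule ai)
  have divZ: "a \<in> ZP P \<and> b \<in> ZP P" if ab: "a \<in> poly_ring P 2 x" "b \<in> poly_ring P 2 x" "a * b = c" "c \<in> ZP P" "c \<noteq> 0" for a b c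
  proof -
    have "a \<in> ring_gen (P \<union> {x 2}) \<and> b \<in> ring_gen (P \<union> {x 2})"
      using DEG[OF ring_gen_subring transc1[OF aix] subsetD[OF poly_ring_PV1 ab(1)] subsetD[OF poly_ring_PV1 ab(2)] ab(3)
          subsetD[OF ZP_mono[of P "P \<union> {x 2}"] ab(4)] ab(5)] by blast
    thus ?thesis
      using DEG[OF ZP_subring transc_ZP2[OF aix] subsetD[OF ZPv_PV] subsetD[OF ZPv_PV] ab(3) ab(4) ab(5)] by blast
  qed
  have dZ: "d \<in> ZP P" "qa \<in> ZP P" using divZ[OF d qa(1) qa(2)[symmetric] pZ(1) pnz(1)] by auto
  have qbZ: "qb \<in> ZP P" using divZ[OF d qb(1) qb(2)[symmetric] pZ(2) pnz(2)] by auto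
  have d0: "d \<noteq> 0" using qa(2) pnz by auto
  define zz where "zz = d * qa * qb * inverse (x 1) * inverse (x 2)"
  have zzL: "zz \<in> laurent_ring P 2 (Wv s1 s2 p x)" if ns: "\<not> (s1 \<and> s2)" for s1 s2
  proof -
    let ?L = "laurent_ring P 2 (Wv s1 s2 p x)"
    have ZL: "d \<in> ?L" "qa \<in> ?L" "qb \<in> ?L" using dZ qbZ ZP_laurent by auto
    have g: "Wv s1 s2 p x 1 \<in> ?L" "Wv s1 s2 p x 2 \<in> ?L" "inverse (Wv s1 s2 p x 1) \<in> ?L" "inverse (Wv s1 s2 p x 2) \<in> ?L"
      by (rule laurent_gens)+
    note mm = sr_mult[OF laurent_subring]
    consider "\<not> s1" "\<not> s2" | "s1" "\<not> s2" | "\<not> s1" "s2" using ns by blast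
    thus ?thesis
    proof cases
      case 1
      have "zz = d * qa * qb * inverse (Wv s1 s2 p x 1) * inverse (Wv s1 s2 p x 2)"
        unfolding zz_def Wv1 Wv2 zv_def using 1 by simp
      thus ?thesis using ZL g by (simp add: mm)
    next
      case 2
      have "zz = Wv s1 s2 p x 1 * qb * inverse (Wv s1 s2 p x 2)"
        unfolding zz_def Wv1 Wv2 zv_def using 2 qa(2) by (simp add: mult_ac)
      thus ?thesis using ZL g by (simp add: mm)
    next
      case 3
      have "zz = qa * inverse (Wv s1 s2 p x 1) * Wv s1 s2 p x 2"
        unfolding zz_def Wv1 Wv2 zv_def using 3 qb(2) by (simp add: mult_ac)
      thus ?thesis using ZL g by (simp add: mm)
    qed
  qed
  have zzU: "zz \<in> upper_bound2 P X t0"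
    unfolding upper_bound2_def L0 L1 Lm using zzL kk by auto
  have zzn: "zz \<notin> laurent_ring P 2 (X (t0 + 2))"
  proof
    assume zin: "zz \<in> laurent_ring P 2 (X (t0 + 2))"
    let ?Z = "X (t0 + 2)"
    have Znz: "?Z 1 \<noteq> 0" "?Z 2 \<noteq> 0" using alg_indep_nz[OF ai] by auto
    obtain N0 where N0: "\<forall>M\<ge>N0. \<exists>c. (\<forall>g. c g \<in> ZP P) \<and> zz = LS ?Z c (Box M)"
      using laurent_rep[OF Znz zin] by blast
    then obtain c where c: "\<forall>g. c g \<in> ZP P" "zz = LS ?Z c (Box (N0 + 1))"
      using le_add1[of N0 1] by blast
    have in11: "(1, 1) \<in> Box (N0 + 1)" unfolding Box_def by auto
    have Z12: "?Z 1 * ?Z 2 = d * zz"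
      using v2[OF one2(1)] v2[OF one2(2)] qa(2) qb(2) unfolding zz_def zv_def by (simp add: mult_ac)
    define c' where "c' g = c g - (if g = (1, 1) then inverse d else 0)" for g :: "int \<times> int"
    have "(\<Sum>g\<in>Box (N0 + 1). (if g = (1, 1) then inverse d else 0) * (?Z 1 powi fst g * ?Z 2 powi snd g))
        = (\<Sum>g\<in>Box (N0 + 1). if g = (1, 1) then inverse d * (?Z 1 powi fst g * ?Z 2 powi snd g) else 0)"
      by (intro sum.cong refl) simp
    also have "\<dots> = inverse d * (?Z 1 * ?Z 2)" using in11 finite_Box by (simp add: sum.delta)
    also have "\<dots> = zz" using Z12 d0 by simp
    finally have s2: "(\<Sum>g\<in>Box (N0 + 1). (if g = (1, 1) then inverse d else 0) * (?Z 1 powi fst g * ?Z 2 powi snd g)) = zz" .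
    have "(\<Sum>g\<in>Box (N0 + 1). c' g * (?Z 1 powi fst g * ?Z 2 powi snd g)) = LS ?Z c (Box (N0 + 1)) - zz"
      unfolding c'_def LS_def s2[symmetric] by (simp add: left_diff_distrib sum_subtractf)
    also have "\<dots> = 0" using c(2) by simp
    finally have s0: "(\<Sum>g\<in>Box (N0 + 1). c' g * (?Z 1 powi fst g * ?Z 2 powi snd g)) = 0" .
    have cZ: "\<forall>g\<in>Box (N0 + 1). d * c' g \<in> ZP P"
    proof
      fix g
      show "d * c' g \<in> ZP P"
      proof (cases "g = (1, 1)")
        case True
        have "d * c' g = d * c g - 1" unfolding c'_def using True d0 by (simp add: right_diff_distrib)
        thus ?thesis using sr_diff[OF ZP_subring sr_mult[OF ZP_subring dZ(1) c(1)[rule_format, of g]] sr_1[OF ZP_subring]] by simp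
      next
        case False
        thus ?thesis unfolding c'_def using sr_mult[OF ZP_subring dZ(1) c(1)[rule_format, of g]] by simp
      qed
    qed
    have "c' (1, 1) = 0" using UL[OF ai finite_Box d0 cZ s0] in11 by blast
    hence "d * c (1, 1) = 1" unfolding c'_def using d0 by simp
    hence "d \<in> P \<union> uminus ` P" using trivial_units[OF gre dZ(1) c(1)[rule_format]] by blast
    thus False using dn by blast
  qed
  have "upper_cluster_alg2 P X \<subseteq> upper_bound2 P X t0"
    unfolding upper_bound2_def upper_cluster_alg2_def by blast
  moreover have "zz \<notin> upper_cluster_alg2 P X" using zzn unfolding upper_cluster_alg2_def by blast
  ultimately have "upper_cluster_alg2 P X \<subset> upper_bound2 P X t0" using zzU by blast
  thus ?thesis using lowA clA upA by simp
qed

end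



theorem proposition5p9:
  fixes P :: "'f::field set" and splus :: "'f \<Rightarrow> 'f \<Rightarrow> 'f"
    and X :: "int \<Rightarrow> nat \<Rightarrow> 'f" and Y :: "int \<Rightarrow> nat \<Rightarrow> 'f"
    and B :: "int \<Rightarrow> nat \<Rightarrow> nat \<Rightarrow> int" and t0 :: int
  assumes "semifield_in P splus"
    and "group_ring_embedded P"
    and "cluster_pattern2 P splus X Y B"
    and "\<not> coprime_seed P splus 2 (X t0) (Y t0) (B t0)"
  shows "lower_bound2 P X t0 = cluster_alg2 P X
       \<and> cluster_alg2 P X = upper_cluster_alg2 P X
       \<and> upper_cluster_alg2 P X \<subset> upper_bound2 P X t0"
proof -
  interpret SF P splus by (rule SF.intro) (rule assms(1))
  have seed: "is_seed P 2 (X t0) (Y t0) (B t0)" using assms(3) unfolding cluster_pattern2_def by blast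
  then obtain dd :: "nat \<Rightarrow> int" where dd: "\<forall>i\<in>{1..2}. dd i > 0"
    "\<forall>i\<in>{1..2}. \<forall>j\<in>{1..2}. dd i * B t0 i j = - (dd j * B t0 j i)"
    unfolding is_seed_def skew_symmetrizable_def by blast
  have one2: "(1::nat) \<in> {1..2}" "(2::nat) \<in> {1..2}" by auto
  have d12: "dd 1 > 0" "dd 2 > 0" using dd(1) one2 by auto
  have e11: "dd 1 * B t0 1 1 = - (dd 1 * B t0 1 1)" using dd(2) one2 by blast
  have e22: "dd 2 * B t0 2 2 = - (dd 2 * B t0 2 2)" using dd(2) one2 by blast
  have e12: "dd 1 * B t0 1 2 = - (dd 2 * B t0 2 1)" using dd(2) one2 by blast
  have B11: "B t0 1 1 = 0" using e11 d12 by simp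
  have B22: "B t0 2 2 = 0" using e22 d12 by simp
  show ?thesis
  proof (cases "B t0 2 1 = 0")
    case False
    have "B t0 1 2 \<noteq> 0" using e12 d12 False by auto
    hence "coprime_seed P splus 2 (X t0) (Y t0) (B t0)"
      using COPRIME[OF assms(2) seed B11 B22 False] by blast
    thus ?thesis using assms(4) by blast
  next
    case True
    have "B t0 1 2 = 0" using e12 d12 True by simp
    hence Bz: "\<forall>i\<in>{1..2}. \<forall>j\<in>{1..2}. B t0 i j = 0"
    proof (intro ballI)
      fix i j :: nat assume "i \<in> {1..2}" "j \<in> {1..2}"
      hence "i = 1 \<or> i = 2" "j = 1 \<or> j = 2" using two_cases by blast+
      thus "B t0 i j = 0" using True B11 B22 \<open>B t0 1 2 = 0\<close> by auto
    qed
    show ?thesis by (rule MAIN0[OF assms(2) assms(3) Bz assms(4)])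
  qed
qed


end
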